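(* Let $\mathcal{N}(\mathcal{K})=(\mathcal{S},\mathcal{C},\mathcal{R},\mathcal{K})$ be a reaction-weighted chemical reaction network and let $\tilde{\mathcal{N}}(\tilde{\mathcal{B}})=(\tilde{\mathcal{S}},\tilde{\mathcal{C}},\tilde{\mathcal{C}}_K,\tilde{\mathcal{R}},\tilde{\mathcal{B}})$ be an improper reaction-weighted translation of $\mathcal{N}(\mathcal{K})$ (with associated maps $h$, $h_K$). Suppose that $(\tilde{\mathcal{S}},\tilde{\mathcal{C}},\tilde{\mathcal{R}})$ is weakly reversible, that its deficiency is $\tilde\delta=0$, that $\tilde S_I\subseteq\tilde S_K$, and that there is a resolving complex set $\tilde{\mathcal{C}}_R$ with $\tilde{\mathcal{C}}_I\cap\tilde{\mathcal{C}}_R=\emptyset$. Suppose furthermore that: for every $p'\in\tilde{\mathcal{C}}_I$ there is a $k'\in\tilde{\mathcal{C}}(\tilde{\mathcal{B}})$, $k'\ne p'$, such that for every $i'\in\tilde{\mathcal{C}}_R$ and every directed path in $(\tilde{\mathcal{C}},\tilde{\mathcal{R}})$ from $p'$ to $i'$, the complex $k'$ lies on that path. Then $\mathcal{N}(\mathcal{K})$ and $\tilde{\mathcal{N}}(\tilde{\mathcal{B}})$ are steady state resolvable.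
   Context: A chemical reaction network $(\mathcal{S},\mathcal{C},\mathcal{R})$ consists of species $X_1,\dots,X_n$, complexes $C_1,\dots,C_m$ (identified with indices $1,\dots,m$) with pairwise distinct stoichiometric vectors $y_i\in\mathbb{Z}_{\ge0}^n$, and reactions $\mathcal{R}\subseteq\mathcal{C}\times\mathcal{C}$ (no self-loops); it is viewed as a directed graph on $\mathcal{C}$. A path from $C_i$ to $C_j$ is a sequence of distinct complexes $C_i=C_{\nu(1)}\to\cdots\to C_{\nu(l)}=C_j$ with each arrow a reaction. Linkage classes are the connected components of the underlying undirected graph; the network is weakly reversible if every linkage class is strongly connected. The stoichiometric subspace is $S=\mathrm{span}\{y_j-y_i:(i,j)\in\mathcal{R}\}$, $s=\dim S$, and the deficiency is $\delta=m-\ell-s$ with $\ell$ the number of linkage classes. A reaction-weight set $\mathcal{K}=\{k(i,j)\}$ has $k(i,j)>0$ iff $(i,j)\in\mathcal{R}$ and $k(i,j)=0$ otherwise. The mass action system of $\mathcal{N}(\mathcal{K})$ is $\dot{\mathbf{x}}=YA(\mathcal{K})\Psi(\mathbf{x})$, where $Y$ has columns $y_i$, $A(\mathcal{K})_{ij}=k(j,i)$ for $i\ne j$, $A(\mathcal{K})_{ii}=-\sum_l k(i,l)$, $\Psi(\mathbf{x})_i=\mathbf{x}^{y_i}$. A generalized chemical reaction network $(\mathcal{S},\mathcal{C},\mathcal{C}_K,\mathcal{R})$ is a network $(\mathcal{S},\mathcal{C},\mathcal{R})$ with kinetic complexes $(C_K)_i$ (vectors $(y_K)_i$) in one-to-one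 correspondence with $\mathcal{C}$; its generalized mass action system is $\dot{\mathbf{x}}=YA(\mathcal{K})\Psi_K(\mathbf{x})$ with $\Psi_K(\mathbf{x})_i=\mathbf{x}^{(y_K)_i}$. Graph notions refer to $(\mathcal{S},\mathcal{C},\mathcal{R})$. Kinetic-order subspace: $S_K=\mathrm{span}\{(y_K)_j-(y_K)_i:(i,j)\in\mathcal{R}\}$. Kinetically-relevant complexes $\mathcal{C}(\mathcal{K})$: those $i$ with $\sum_{j\ne i}k(i,j)(y_j-y_i)\ne0$. Reaction-weighted translation: $\tilde{\mathcal{N}}(\tilde{\mathcal{B}})$ (complexes $1,\dots,\tilde m$, vectors $\tilde y_{i'}$, kinetic vectors $(\tilde y_K)_{i'}$, weights $\tilde b(i',j')$, kinetically-relevant set $\tilde{\mathcal{C}}(\tilde{\mathcal{B}})$) is a reaction-weighted translation of $\mathcal{N}(\mathcal{K})$ if (1) there is a surjection $h:\mathcal{C}(\mathcal{K})\to\tilde{\mathcal{C}}(\tilde{\mathcal{B}})$ and numbers $\lambda(i,j')\ge0$ with (a) $\lambda(i,j')>0\Rightarrow(h(i),j')\in\tilde{\mathcal{R}}$, (b) $\sum_{\{i:h(i)=i'\}}\lambda(i,j')=\tilde b(i',j')$, (c) $\sum_{j\ne i}k(i,j)(y_j-y_i)=\sum_{j'\ne h(i)}\lambda(i,j')(\tilde y_{j'}-\tilde y_{h(i)})$; and (2) there is an injection $h_K:\tilde{\mathcal{C}}(\tilde{\mathcal{B}})\to\mathcal{C}(\mathcal{K})$ with $h(h_K(i'))=i'$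 and $(\tilde y_K)_{i'}=y_{h_K(i')}$. It is improper if $h$ is not injective. $\tilde{\mathcal{C}}_I=\{k'\in\tilde{\mathcal{C}}(\tilde{\mathcal{B}}):h(i)=h(j)=k'\text{ for some }i\ne j\}$; $h^{-1}(k')=\{i:h(i)=k'\}$; $\tilde S_I=\mathrm{span}\{y_j-y_i:i,j\in h^{-1}(k'),k'\in\tilde{\mathcal{C}}_I\}$; $\tilde S_K$ is the kinetic-order subspace of $\tilde{\mathcal{N}}$. Resolving complex set (when $\tilde{\mathcal{N}}$ is weakly reversible and $\tilde S_I\subseteq\tilde S_K$): $\tilde{\mathcal{C}}_R\subseteq\tilde{\mathcal{C}}(\tilde{\mathcal{B}})$ such that for every $i,j\in h^{-1}(k')$, $k'\in\tilde{\mathcal{C}}_I$, there are constants $c(i',j')$, $i'<j'$, with (1) $y_j-y_i=\sum_{i'<j'}c(i',j')(y_{h_K(j')}-y_{h_K(i')})$; (2) $c(i',j')\ne0$ implies $i',j'$ in the same linkage class of $\tilde{\mathcal{N}}$; (3) $c(i',j')\ne0$ implies $i',j'\in\tilde{\mathcal{C}}_R$. Steady state equivalence: the two (generalized) mass action systems have the same steady states. Steady state resolvable: there exists a reaction-weight set $\tilde{\mathcal{K}}$ for $(\tilde{\mathcal{S}},\tilde{\mathcal{C}},\tilde{\mathcal{C}}_K,\tilde{\mathcal{R}})$ such that $\mathcal{N}(\mathcal{K})$ and $\tilde{\mathcal{N}}(\tilde{\mathcal{K}})$ are steady state equivalent. *)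

theory Defs
  imports "HOL-Analysis.Analysis"
begin

text \<open>Species are indexed by a finite type 's; vectors in R^S are real^'s.
Complexes of a network are indexed by 0..<m; y i is the stoichiometric vector of complex i,
R is the reaction set (pairs of complex indices), k i j the reaction weight of (i,j).\<close>

definition cvec_ok :: "real^'s \<Rightarrow> bool" where
  "cvec_ok v \<longleftrightarrow> (\<forall>s. v $ s \<in> \<int> \<and> 0 \<le> v $ s)"

definition crn :: "nat \<Rightarrow> (nat \<Rightarrow> real^'s) \<Rightarrow> (nat \<times> nat) set \<Rightarrow> bool" where
  "crn m y R \<longleftrightarrow> inj_on y {..<m} \<and> (\<forall>i<m. cvec_ok (y i)) \<and>
     R \<subseteq> {..<m} \<times> {..<m} \<and> (\<forall>i. (i, i) \<notin> R)"

definition rw_set :: "(nat \<times> nat) set \<Rightarrow> (nat \<Rightarrow> nat \<Rightarrow> real) \<Rightarrow> bool" where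
  "rw_set R k \<longleftrightarrow> (\<forall>i j. (0 < k i j \<longleftrightarrow> (i, j) \<in> R) \<and> ((i, j) \<notin> R \<longrightarrow> k i j = 0))"

definition A_mat :: "nat \<Rightarrow> (nat \<Rightarrow> nat \<Rightarrow> real) \<Rightarrow> nat \<Rightarrow> nat \<Rightarrow> real" where
  "A_mat m k i j = (if i \<noteq> j then k j i else - (\<Sum>l<m. k i l))"

definition Psi :: "(nat \<Rightarrow> real^'s) \<Rightarrow> real^'s \<Rightarrow> nat \<Rightarrow> real" where
  "Psi yK x i = (\<Prod>s\<in>UNIV. (x $ s) powr (yK i $ s))"

text \<open>Right-hand side Y A(K) Psi_K(x) of the generalized mass action system
(mass action: yK = y).\<close>
definition gma_rhs :: "nat \<Rightarrow> (nat \<Rightarrow> real^'s) \<Rightarrow> (nat \<Rightarrow> real^'s) \<Rightarrow>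
    (nat \<Rightarrow> nat \<Rightarrow> real) \<Rightarrow> real^'s \<Rightarrow> real^'s" where
  "gma_rhs m y yK k x = (\<chi> s. \<Sum>i<m. (y i $ s) * (\<Sum>l<m. A_mat m k i l * Psi yK x l))"

definition steady_states :: "nat \<Rightarrow> (nat \<Rightarrow> real^'s) \<Rightarrow> (nat \<Rightarrow> real^'s) \<Rightarrow>
    (nat \<Rightarrow> nat \<Rightarrow> real) \<Rightarrow> (real^'s) set" where
  "steady_states m y yK k = {x. (\<forall>s. 0 < x $ s) \<and> gma_rhs m y yK k x = 0}"

definition kin_rel :: "nat \<Rightarrow> (nat \<Rightarrow> real^'s) \<Rightarrow> (nat \<Rightarrow> nat \<Rightarrow> real) \<Rightarrow> nat set" where
  "kin_rel m y k = {i. i < m \<and> (\<Sum>j\<in>{..<m} - {i}. k i j *\<^sub>R (y j - y i)) \<noteq> 0}"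

definition linked :: "nat \<Rightarrow> (nat \<times> nat) set \<Rightarrow> (nat \<times> nat) set" where
  "linked m R = {(i, j). i < m \<and> j < m \<and> (i, j) \<in> (R \<union> R\<inverse>)\<^sup>*}"

definition weakly_reversible :: "nat \<Rightarrow> (nat \<times> nat) set \<Rightarrow> bool" where
  "weakly_reversible m R \<longleftrightarrow> (\<forall>i j. (i, j) \<in> linked m R \<longrightarrow> (i, j) \<in> R\<^sup>*)"

definition n_linkage :: "nat \<Rightarrow> (nat \<times> nat) set \<Rightarrow> nat" where
  "n_linkage m R = card ({..<m} // linked m R)"

definition stoich_space :: "(nat \<Rightarrow> real^'s) \<Rightarrow> (nat \<times> nat) set \<Rightarrow> (real^'s) set" where
  "stoich_space y R = span {y j - y i | i j. (i, j) \<in> R}"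

definition deficiency :: "nat \<Rightarrow> (nat \<Rightarrow> real^'s) \<Rightarrow> (nat \<times> nat) set \<Rightarrow> int" where
  "deficiency m y R = int m - int (n_linkage m R) - int (dim (stoich_space y R))"

definition kin_order_space :: "(nat \<Rightarrow> real^'s) \<Rightarrow> (nat \<times> nat) set \<Rightarrow> (real^'s) set" where
  "kin_order_space yK R = span {yK j - yK i | i j. (i, j) \<in> R}"

text \<open>Reaction-weighted translation (mt, yt, ytK, Rt, bt) of N(K) = (m, y, R, k),
with maps h, hK and numbers lam.\<close>
definition rw_translation ::
  "nat \<Rightarrow> (nat \<Rightarrow> real^'s) \<Rightarrow> (nat \<times> nat) set \<Rightarrow> (nat \<Rightarrow> nat \<Rightarrow> real) \<Rightarrow>
   nat \<Rightarrow> (nat \<Rightarrow> real^'s) \<Rightarrow> (nat \<Rightarrow> real^'s) \<Rightarrow> (nat \<times> nat) set \<Rightarrow> (nat \<Rightarrow> nat \<Rightarrow> real) \<Rightarrow>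
   (nat \<Rightarrow> nat) \<Rightarrow> (nat \<Rightarrow> nat) \<Rightarrow> (nat \<Rightarrow> nat \<Rightarrow> real) \<Rightarrow> bool" where
  "rw_translation m y R k mt yt ytK Rt bt h hK lam \<longleftrightarrow>
     crn mt yt Rt \<and> rw_set Rt bt \<and>
     h ` kin_rel m y k = kin_rel mt yt bt \<and>
     (\<forall>i\<in>kin_rel m y k. \<forall>j'. 0 \<le> lam i j' \<and> (0 < lam i j' \<longrightarrow> (h i, j') \<in> Rt)) \<and>
     (\<forall>i'\<in>kin_rel mt yt bt. \<forall>j'.
        (\<Sum>i\<in>{i \<in> kin_rel m y k. h i = i'}. lam i j') = bt i' j') \<and>
     (\<forall>i\<in>kin_rel m y k.
        (\<Sum>j\<in>{..<m} - {i}. k i j *\<^sub>R (y j - y i)) =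
        (\<Sum>j'\<in>{..<mt} - {h i}. lam i j' *\<^sub>R (yt j' - yt (h i)))) \<and>
     inj_on hK (kin_rel mt yt bt) \<and> hK ` kin_rel mt yt bt \<subseteq> kin_rel m y k \<and>
     (\<forall>i'\<in>kin_rel mt yt bt. h (hK i') = i' \<and> ytK i' = y (hK i'))"

definition C_I :: "nat set \<Rightarrow> (nat \<Rightarrow> nat) \<Rightarrow> nat set" where
  "C_I Crel h = {k'. \<exists>i\<in>Crel. \<exists>j\<in>Crel. i \<noteq> j \<and> h i = k' \<and> h j = k'}"

definition S_I :: "(nat \<Rightarrow> real^'s) \<Rightarrow> nat set \<Rightarrow> (nat \<Rightarrow> nat) \<Rightarrow> (real^'s) set" where
  "S_I y Crel h = span {y j - y i | i j. \<exists>k'\<in>C_I Crel h.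
       i \<in> Crel \<and> j \<in> Crel \<and> h i = k' \<and> h j = k'}"

text \<open>Resolving complex set CR (Crt is the kinetically-relevant set of the translation).\<close>
definition resolving_set ::
  "nat \<Rightarrow> (nat \<times> nat) set \<Rightarrow> nat set \<Rightarrow> (nat \<Rightarrow> real^'s) \<Rightarrow> nat set \<Rightarrow>
   (nat \<Rightarrow> nat) \<Rightarrow> (nat \<Rightarrow> nat) \<Rightarrow> nat set \<Rightarrow> bool" where
  "resolving_set mt Rt Crt y Crel h hK CR \<longleftrightarrow> CR \<subseteq> Crt \<and>
     (\<forall>k'\<in>C_I Crel h. \<forall>i\<in>Crel. \<forall>j\<in>Crel. h i = k' \<longrightarrow> h j = k' \<longrightarrow>
        (\<exists>c :: nat \<Rightarrow> nat \<Rightarrow> real.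
           y j - y i = (\<Sum>(i', j')\<in>{(a, b). a < b \<and> b < mt}. c i' j' *\<^sub>R (y (hK j') - y (hK i'))) \<and>
           (\<forall>i' j'. i' < j' \<and> c i' j' \<noteq> 0 \<longrightarrow>
               (i', j') \<in> linked mt Rt \<and> i' \<in> CR \<and> j' \<in> CR)))"

definition is_path :: "(nat \<times> nat) set \<Rightarrow> nat list \<Rightarrow> nat \<Rightarrow> nat \<Rightarrow> bool" where
  "is_path R xs a b \<longleftrightarrow> xs \<noteq> [] \<and> distinct xs \<and> hd xs = a \<and> last xs = b \<and>
     (\<forall>t. Suc t < length xs \<longrightarrow> (xs ! t, xs ! Suc t) \<in> R)"

end

theory Submission
  imports Defs "HOL-Library.Transitive_Closure_Table"
begin


definition bal :: "nat set \<Rightarrow> (nat\<Rightarrow>nat\<Rightarrow>real) \<Rightarrow> (nat\<Rightarrow>real) \<Rightarrow> bool" where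
  "bal V Q z \<longleftrightarrow> (\<forall>v\<in>V. z v * (\<Sum>w\<in>V. Q v w) = (\<Sum>u\<in>V. Q u v * z u))"

definition edg :: "nat set \<Rightarrow> (nat\<Rightarrow>nat\<Rightarrow>real) \<Rightarrow> (nat\<times>nat) set" where
  "edg V Q = {(u,v). u\<in>V \<and> v\<in>V \<and> 0 < Q u v}"

definition avoid :: "(nat\<times>nat) set \<Rightarrow> nat \<Rightarrow> (nat\<times>nat) set" where
  "avoid E d = {(u,v). (u,v)\<in>E \<and> v \<noteq> d}"

definition symr :: "(nat\<times>nat) set \<Rightarrow> bool" where
  "symr E \<longleftrightarrow> (\<forall>u v. (u,v)\<in>E\<^sup>* \<longrightarrow> (v,u)\<in>E\<^sup>*)"

lemma uniq:
  assumes fin: "finite V" and nn: "\<forall>u v. 0 \<le> Q u v"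
    and zp: "\<forall>v\<in>V. 0 < z v" and zp': "\<forall>v\<in>V. 0 < z' v"
    and b1: "bal V Q z" and b2: "bal V Q z'" and sy: "symr (edg V Q)"
    and aV: "a \<in> V" and ab: "(a,b) \<in> (edg V Q)\<^sup>*"
  shows "z' a / z a = z' b / z b"
proof -
  define E where "E = edg V Q"
  define r where "r v = z' v / z v" for v
  define K where "K = {u\<in>V. (a,u)\<in>E\<^sup>*}"
  have fK: "finite K" using fin K_def by auto
  have aK: "a \<in> K" using aV K_def by auto
  define M where "M = Max (r ` K)"
  have "M \<in> r ` K" using Max_in[of "r ` K"] fK aK M_def by blast
  then obtain v where vK: "v \<in> K" and rv: "r v = M" by blast
  have Mge: "\<forall>u\<in>K. r u \<le> M" using fK M_def by auto
  have Esub: "\<And>u w. (u,w) \<in> E \<Longrightarrow> u \<in> V \<and> w \<in> V \<and> 0 < Q u w"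
    unfolding E_def edg_def by auto
  have Ksym: "\<And>u. u \<in> K \<Longrightarrow> (u,a) \<in> E\<^sup>*" using sy unfolding symr_def K_def E_def by auto
  have stepM: "r u = M" if wK: "w \<in> K" and rw: "r w = M" and uw: "(u,w) \<in> E" for u w
  proof -
    have uV: "u \<in> V" and wV: "w \<in> V" and Qp: "0 < Q u w" using Esub[OF uw] by auto
    have "(u,a) \<in> E\<^sup>*" using uw Ksym[OF wK] by (meson converse_rtrancl_into_rtrancl)
    then have uK: "u \<in> K" using sy uV unfolding K_def symr_def E_def by auto
    have e1: "z w * (\<Sum>x\<in>V. Q w x) = (\<Sum>x\<in>V. Q x w * z x)" using b1 wV bal_def by auto
    have e2: "z' w * (\<Sum>x\<in>V. Q w x) = (\<Sum>x\<in>V. Q x w * z' x)" using b2 wV bal_def by auto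
    have zw': "z' w = M * z w" using rw zp wV unfolding r_def by auto
    have z'x: "\<And>x. x \<in> V \<Longrightarrow> z' x = r x * z x" using zp unfolding r_def by auto
    have "(\<Sum>x\<in>V. Q x w * z x * (M - r x)) = M * (\<Sum>x\<in>V. Q x w * z x) - (\<Sum>x\<in>V. Q x w * z' x)"
      by (simp add: sum_subtractf sum_distrib_left z'x algebra_simps cong: sum.cong)
    also have "\<dots> = 0" using e1 e2 zw' by (simp add: algebra_simps)
    finally have s0: "(\<Sum>x\<in>V. Q x w * z x * (M - r x)) = 0" .
    have nonneg: "\<forall>x\<in>V. 0 \<le> Q x w * z x * (M - r x)"
    proof
      fix x assume xV: "x \<in> V"
      show "0 \<le> Q x w * z x * (M - r x)"
      proof (cases "Q x w = 0")
        case False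
        then have "0 < Q x w" using nn[rule_format, of x w] by linarith
        then have "(x,w) \<in> E" using xV wV E_def edg_def by auto
        then have "(x,a) \<in> E\<^sup>*" using Ksym[OF wK] by (meson converse_rtrancl_into_rtrancl)
        then have "x \<in> K" using sy xV unfolding K_def symr_def E_def by auto
        then have "r x \<le> M" using Mge by auto
        then show ?thesis using nn zp xV by (simp add: less_imp_le)
      qed simp
    qed
    have "\<forall>x\<in>V. Q x w * z x * (M - r x) = 0"
      using iffD1[OF sum_nonneg_eq_0_iff[OF fin] s0] nonneg by blast
    then have "Q u w * z u * (M - r u) = 0" using uV by blast
    then show ?thesis using Qp zp uV by auto
  qed
  have all: "r u = M \<and> u \<in> K" if "(u,v) \<in> E\<^sup>*" for u
    using that
  proof (induction rule: converse_rtrancl_induct)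
    case base then show ?case using rv vK by auto
  next
    case (step u u1)
    then have "r u = M" using stepM by blast
    moreover have "u \<in> K"
    proof -
      have "(u,a) \<in> E\<^sup>*" using step Ksym by (meson converse_rtrancl_into_rtrancl)
      moreover have "u \<in> V" using Esub step by blast
      ultimately show ?thesis using sy unfolding K_def symr_def E_def by auto
    qed
    ultimately show ?case by auto
  qed
  have "(a,v) \<in> E\<^sup>*" using vK K_def by auto
  then have ra: "r a = M" using all by auto
  have "(b,a) \<in> E\<^sup>*" using ab sy E_def symr_def by auto
  then have "(b,v) \<in> E\<^sup>*" using \<open>(a,v)\<in>E\<^sup>*\<close> by auto
  then have rb: "r b = M" using all by auto
  show ?thesis using ra rb r_def by auto
qed



definition red :: "nat set \<Rightarrow> (nat\<Rightarrow>nat\<Rightarrow>real) \<Rightarrow> nat \<Rightarrow> nat \<Rightarrow> nat \<Rightarrow> real" where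
  "red A Q d u w = Q u w + (if w = d then (\<Sum>v\<in>A. Q u v) else 0)"

lemma red_bal:
  assumes fin: "finite V" and AV: "A \<subseteq> V" and dV: "d \<in> V" and dA: "d \<notin> A"
    and clo: "\<forall>u\<in>A. \<forall>w\<in>V. Q u w \<noteq> 0 \<longrightarrow> w \<in> A \<or> w = d"
    and b: "bal V Q z"
  shows "bal (V - A) (red A Q d) z"
  unfolding bal_def
proof
  fix w assume wV': "w \<in> V - A"
  define V' where "V' = V - A"
  have fA: "finite A" using fin AV finite_subset by blast
  have fV': "finite V'" using fin V'_def by auto
  have dV': "d \<in> V'" using dV dA V'_def by auto
  have splitV: "\<And>f. (\<Sum>x\<in>V. f x) = (\<Sum>x\<in>V'. f x) + (\<Sum>x\<in>A. f x)"
    unfolding V'_def using sum.subset_diff[OF AV fin] by simp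
  have row: "(\<Sum>x\<in>V'. red A Q d w x) = (\<Sum>x\<in>V. Q w x)"
  proof -
    have "(\<Sum>x\<in>V'. red A Q d w x) = (\<Sum>x\<in>V'. Q w x) + (\<Sum>x\<in>V'. (if x = d then (\<Sum>v\<in>A. Q w v) else 0))"
      unfolding red_def by (simp add: sum.distrib)
    also have "(\<Sum>x\<in>V'. (if x = d then (\<Sum>v\<in>A. Q w v) else 0)) = (\<Sum>v\<in>A. Q w v)"
      using fV' dV' by (simp add: sum.delta)
    finally show ?thesis using splitV[of "Q w"] by simp
  qed
  have rowA: "(\<Sum>x\<in>V'. Q v x) = Q v d" if vA: "v \<in> A" for v
  proof -
    have "(\<Sum>x\<in>V'. Q v x) = (\<Sum>x\<in>V'. if x = d then Q v d else 0)"
    proof (rule sum.cong)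
      fix x assume "x \<in> V'"
      then have "x \<in> V" "x \<notin> A" using V'_def by auto
      then show "Q v x = (if x = d then Q v d else 0)" using clo vA by auto
    qed simp
    also have "\<dots> = Q v d" using fV' dV' by (simp add: sum.delta)
    finally show ?thesis .
  qed
  have bw: "z w * (\<Sum>x\<in>V. Q w x) = (\<Sum>u\<in>V. Q u w * z u)" using b wV' bal_def by auto
  have col: "(\<Sum>u\<in>V'. red A Q d u w * z u) = (\<Sum>u\<in>V'. Q u w * z u) +
      (if w = d then (\<Sum>u\<in>V'. (\<Sum>v\<in>A. Q u v) * z u) else 0)"
    unfolding red_def by (simp add: sum.distrib algebra_simps)
  show "z w * (\<Sum>x\<in>V - A. red A Q d w x) = (\<Sum>u\<in>V - A. red A Q d u w * z u)"
  proof (cases "w = d")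
    case False
    have "(\<Sum>u\<in>A. Q u w * z u) = 0"
    proof (rule sum.neutral, rule ballI)
      fix u assume "u \<in> A"
      then have "Q u w = 0" using clo wV' False by auto
      then show "Q u w * z u = 0" by simp
    qed
    then show ?thesis using row col bw splitV[of "\<lambda>u. Q u w * z u"] False V'_def by simp
  next
    case True
    have cons: "(\<Sum>u\<in>A. Q u d * z u) = (\<Sum>u\<in>V'. (\<Sum>v\<in>A. Q u v) * z u)"
    proof -
      have s: "(\<Sum>v\<in>A. z v * (\<Sum>x\<in>V. Q v x)) = (\<Sum>v\<in>A. (\<Sum>u\<in>V. Q u v * z u))"
        using b AV bal_def by (auto intro: sum.cong)
      have l: "(\<Sum>v\<in>A. z v * (\<Sum>x\<in>V. Q v x)) = (\<Sum>v\<in>A. (\<Sum>x\<in>A. z v * Q v x)) + (\<Sum>v\<in>A. Q v d * z v)"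
      proof -
        have "(\<Sum>v\<in>A. z v * (\<Sum>x\<in>V. Q v x)) = (\<Sum>v\<in>A. (\<Sum>x\<in>A. z v * Q v x) + z v * (\<Sum>x\<in>V'. Q v x))"
          using splitV[of "Q _"] by (simp add: sum_distrib_left algebra_simps)
        also have "\<dots> = (\<Sum>v\<in>A. (\<Sum>x\<in>A. z v * Q v x) + Q v d * z v)"
          using rowA by (auto intro!: sum.cong)
        finally show ?thesis by (simp add: sum.distrib)
      qed
      have r: "(\<Sum>v\<in>A. (\<Sum>u\<in>V. Q u v * z u)) = (\<Sum>v\<in>A. (\<Sum>u\<in>A. Q u v * z u)) + (\<Sum>v\<in>A. (\<Sum>u\<in>V'. Q u v * z u))"
        using splitV[of "\<lambda>u. Q u _ * z u"] by (simp add: sum.distrib)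
      have sw1: "(\<Sum>v\<in>A. (\<Sum>x\<in>A. z v * Q v x)) = (\<Sum>v\<in>A. (\<Sum>u\<in>A. Q u v * z u))"
        by (subst sum.swap) (simp add: algebra_simps)
      have sw2: "(\<Sum>v\<in>A. (\<Sum>u\<in>V'. Q u v * z u)) = (\<Sum>u\<in>V'. (\<Sum>v\<in>A. Q u v) * z u)"
        by (subst sum.swap) (simp add: sum_distrib_right)
      show ?thesis using s l r sw1 sw2 by (simp add: algebra_simps)
    qed
    show ?thesis using row col bw splitV[of "\<lambda>u. Q u w * z u"] True V'_def cons by simp
  qed
qed



lemma avoid_self: "(x,y) \<in> R\<^sup>* \<Longrightarrow> (x,y) \<in> (avoid R x)\<^sup>*"
proof (induction rule: rtrancl_induct)
  case base then show ?case by simp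
next
  case (step y z)
  show ?case
  proof (cases "z = x")
    case True then show ?thesis by simp
  next
    case False
    then have "(y,z) \<in> avoid R x" using step avoid_def by auto
    then show ?thesis using step by (meson rtrancl.rtrancl_into_rtrancl)
  qed
qed

lemma red_pos:
  assumes nn: "\<forall>u v. 0 \<le> Q u v" and fA: "finite A"
  shows "(0 < red A Q d u w) \<longleftrightarrow> (0 < Q u w \<or> (w = d \<and> (\<exists>v\<in>A. 0 < Q u v)))"
proof -
  have s0: "0 \<le> (\<Sum>v\<in>A. Q u v)" using nn by (simp add: sum_nonneg)
  have sp: "(0 < (\<Sum>v\<in>A. Q u v)) \<longleftrightarrow> (\<exists>v\<in>A. 0 < Q u v)"
  proof
    assume "0 < (\<Sum>v\<in>A. Q u v)"
    then have "(\<Sum>v\<in>A. Q u v) \<noteq> 0" by simp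
    then obtain v where "v \<in> A" "Q u v \<noteq> 0" using sum.neutral by (metis)
    then show "\<exists>v\<in>A. 0 < Q u v" using nn[rule_format, of u v] by (auto simp: less_le)
  next
    assume "\<exists>v\<in>A. 0 < Q u v"
    then obtain v where vA: "v \<in> A" and "0 < Q u v" by blast
    moreover have "Q u v \<le> (\<Sum>v\<in>A. Q u v)"
      using member_le_sum[OF vA, of "Q u"] nn fA by auto
    ultimately show "0 < (\<Sum>v\<in>A. Q u v)" by linarith
  qed
  show ?thesis unfolding red_def using nn[rule_format, of u w] s0 sp
    by (cases "w = d") (auto simp: add_pos_nonneg add_nonneg_pos)
qed

lemma red_nn: "\<forall>u v. 0 \<le> Q u v \<Longrightarrow> \<forall>u v. 0 \<le> red A Q d u v"
  unfolding red_def by (simp add: sum_nonneg)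

context
  fixes V :: "nat set" and Q :: "nat \<Rightarrow> nat \<Rightarrow> real" and p d :: nat and A :: "nat set"
  assumes fin: "finite V" and nn: "\<forall>u v. 0 \<le> Q u v" and sy: "symr (edg V Q)"
    and pV: "p \<in> V" and dV: "d \<in> V" and dp: "d \<noteq> p"
    and A_def: "A = {v\<in>V. (p,v) \<in> (avoid (edg V Q) d)\<^sup>*}"
begin

lemma AV: "A \<subseteq> V" using A_def by auto
lemma pA: "p \<in> A" using A_def pV by auto
lemma fA: "finite A" using AV fin finite_subset by blast

lemma dA: "d \<notin> A"
proof
  assume "d \<in> A"
  then have "(p,d) \<in> (avoid (edg V Q) d)\<^sup>*" using A_def by auto
  then show False using dp
    by (cases rule: rtrancl.cases) (auto simp: avoid_def)
qed

lemma edgE: "(u,w) \<in> edg V Q \<Longrightarrow> u \<in> V \<and> w \<in> V \<and> 0 < Q u w" unfolding edg_def by auto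

lemma cloE: "u \<in> A \<Longrightarrow> (u,w) \<in> edg V Q \<Longrightarrow> w \<in> A \<or> w = d"
proof -
  assume uA: "u \<in> A" and e: "(u,w) \<in> edg V Q"
  show "w \<in> A \<or> w = d"
  proof (cases "w = d")
    case False
    then have "(u,w) \<in> avoid (edg V Q) d" using e avoid_def by auto
    moreover have "(p,u) \<in> (avoid (edg V Q) d)\<^sup>*" using uA A_def by auto
    ultimately have "(p,w) \<in> (avoid (edg V Q) d)\<^sup>*" by auto
    then show ?thesis using edgE[OF e] A_def by auto
  qed simp
qed

lemma clo: "\<forall>u\<in>A. \<forall>w\<in>V. Q u w \<noteq> 0 \<longrightarrow> w \<in> A \<or> w = d"
proof (intro ballI impI)
  fix u w assume uA: "u \<in> A" and wV: "w \<in> V" and q: "Q u w \<noteq> 0"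
  then have "0 < Q u w" using nn[rule_format, of u w] by linarith
  then have "(u,w) \<in> edg V Q" using uA AV wV edg_def by auto
  then show "w \<in> A \<or> w = d" using cloE uA by blast
qed

definition EA :: "(nat\<times>nat) set" where "EA = {(a,b). (a,b) \<in> edg V Q \<and> a \<in> A}"

lemma L3a: "(v,x) \<in> (edg V Q)\<^sup>* \<Longrightarrow> v \<in> A \<Longrightarrow> (x \<in> A \<and> (v,x) \<in> EA\<^sup>*) \<or> (v,d) \<in> EA\<^sup>*"
proof (induction rule: rtrancl_induct)
  case base then show ?case by simp
next
  case (step y z)
  then consider "y \<in> A" "(v,y) \<in> EA\<^sup>*" | "(v,d) \<in> EA\<^sup>*" by auto
  then show ?case
  proof cases
    case 1
    then have zz: "z \<in> A \<or> z = d" using cloE step by blast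
    have "(y,z) \<in> EA" using 1 step EA_def by auto
    then have "(v,z) \<in> EA\<^sup>*" using 1 by auto
    then show ?thesis using zz by auto
  next
    case 2 then show ?thesis by simp
  qed
qed

lemma L3: "(v,x) \<in> (edg V Q)\<^sup>* \<Longrightarrow> v \<in> A \<Longrightarrow> x \<notin> A \<Longrightarrow> (v,d) \<in> EA\<^sup>*"
  using L3a by blast

lemma EA_sub: "EA \<subseteq> edg V Q" using EA_def by auto

abbreviation "Er \<equiv> edg (V - A) (red A Q d)"

lemma Er_iff: "(u,w) \<in> Er \<longleftrightarrow> u \<in> V - A \<and> w \<in> V - A \<and> (0 < Q u w \<or> (w = d \<and> (\<exists>v\<in>A. 0 < Q u v)))"
  unfolding edg_def using red_pos[OF nn fA] by auto

lemma dVA: "d \<in> V - A" using dV dA by auto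

lemma L1: "(u,w) \<in> (edg V Q)\<^sup>* \<Longrightarrow> u \<in> V - A \<Longrightarrow> (w \<in> V - A \<and> (u,w) \<in> Er\<^sup>*) \<or> (w \<in> A \<and> (u,d) \<in> Er\<^sup>*)"
proof (induction rule: rtrancl_induct)
  case base then show ?case by simp
next
  case (step x x')
  have ex: "x \<in> V" "x' \<in> V" "0 < Q x x'" using edgE[OF step(2)] by auto
  from step consider "x \<in> V - A" "(u,x) \<in> Er\<^sup>*" | "x \<in> A" "(u,d) \<in> Er\<^sup>*" by auto
  then show ?case
  proof cases
    case 1
    show ?thesis
    proof (cases "x' \<in> A")
      case True
      then have "(x,d) \<in> Er" using Er_iff 1 dVA ex by auto
      then show ?thesis using 1 True by auto
    next
      case False
      then have "(x,x') \<in> Er" using Er_iff 1 ex by auto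
      then show ?thesis using 1 False ex by auto
    qed
  next
    case 2
    then have "x' \<in> A \<or> x' = d" using cloE step(2) by blast
    then show ?thesis using 2 dVA by auto
  qed
qed

lemma L2: "(u,w) \<in> Er\<^sup>* \<Longrightarrow> (u,w) \<in> (edg V Q)\<^sup>*"
proof (induction rule: rtrancl_induct)
  case base then show ?case by simp
next
  case (step y z)
  then have yz: "y \<in> V - A" "z \<in> V - A" "0 < Q y z \<or> (z = d \<and> (\<exists>v\<in>A. 0 < Q y v))"
    using Er_iff by auto
  show ?case
  proof (cases "0 < Q y z")
    case True
    then have "(y,z) \<in> edg V Q" using yz edg_def by auto
    then show ?thesis using step by auto
  next
    case False
    then obtain v where zd: "z = d" and vA: "v \<in> A" and q: "0 < Q y v" using yz by auto
    have yv: "(y,v) \<in> edg V Q" using yz vA AV q edg_def by auto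
    then have "(v,y) \<in> (edg V Q)\<^sup>*" using sy symr_def by blast
    then have "(v,d) \<in> EA\<^sup>*" using L3 vA yz by auto
    then have "(v,d) \<in> (edg V Q)\<^sup>*" using EA_sub rtrancl_mono by blast
    then have "(y,d) \<in> (edg V Q)\<^sup>*" using yv by (meson converse_rtrancl_into_rtrancl)
    then show ?thesis using step zd by auto
  qed
qed

lemma Er_ends: "(u,w) \<in> Er\<^sup>* \<Longrightarrow> u \<noteq> w \<Longrightarrow> u \<in> V - A \<and> w \<in> V - A"
proof -
  assume r: "(u,w) \<in> Er\<^sup>*" and ne: "u \<noteq> w"
  have "u \<in> V - A"
    using r ne by (cases rule: converse_rtranclE) (auto simp: Er_iff)
  moreover have "w \<in> V - A"
    using r ne by (cases rule: rtranclE) (auto simp: Er_iff)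
  ultimately show ?thesis by simp
qed

lemma symr_red: "symr Er"
  unfolding symr_def
proof (intro allI impI)
  fix u w assume r: "(u,w) \<in> Er\<^sup>*"
  show "(w,u) \<in> Er\<^sup>*"
  proof (cases "u = w")
    case False
    then have uw: "u \<in> V - A" "w \<in> V - A" using Er_ends r by auto
    have "(w,u) \<in> (edg V Q)\<^sup>*" using L2[OF r] sy symr_def by blast
    then show ?thesis using L1 uw by blast
  qed simp
qed

lemma DT1:
  assumes d2A: "d2 \<notin> A"
  shows "(x,y) \<in> (avoid Er d2)\<^sup>* \<Longrightarrow> (x,y) \<in> (avoid (edg V Q) d2)\<^sup>*"
proof (induction rule: rtrancl_induct)
  case base then show ?case by simp
next
  case (step y z)
  then have zd2: "z \<noteq> d2" and e: "(y,z) \<in> Er" using avoid_def by auto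
  then have yz: "y \<in> V - A" "z \<in> V - A" "0 < Q y z \<or> (z = d \<and> (\<exists>v\<in>A. 0 < Q y v))"
    using Er_iff by auto
  show ?case
  proof (cases "0 < Q y z")
    case True
    then have "(y,z) \<in> avoid (edg V Q) d2" using yz edg_def avoid_def zd2 by auto
    then show ?thesis using step by auto
  next
    case False
    then obtain v where zd: "z = d" and vA: "v \<in> A" and q: "0 < Q y v" using yz by auto
    have yv: "(y,v) \<in> edg V Q" using yz vA AV q edg_def by auto
    have yv': "(y,v) \<in> avoid (edg V Q) d2" using yv vA d2A avoid_def by auto
    have "(v,y) \<in> (edg V Q)\<^sup>*" using yv sy symr_def by blast
    then have vd: "(v,d) \<in> EA\<^sup>*" using L3 vA yz by auto
    have "EA \<subseteq> avoid (edg V Q) d2"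
    proof
      fix e assume "e \<in> EA"
      then obtain a b where e: "e = (a,b)" "(a,b) \<in> edg V Q" "a \<in> A" using EA_def by auto
      then have "b \<in> A \<or> b = d" using cloE by blast
      then have "b \<noteq> d2" using d2A zd zd2 by auto
      then show "e \<in> avoid (edg V Q) d2" using e avoid_def by auto
    qed
    then have "(v,d) \<in> (avoid (edg V Q) d2)\<^sup>*" using vd rtrancl_mono by blast
    then have "(y,d) \<in> (avoid (edg V Q) d2)\<^sup>*" using yv' by (meson converse_rtrancl_into_rtrancl)
    then show ?thesis using step zd by auto
  qed
qed

lemma DT2:
  assumes d2A: "d2 \<in> A"
  shows "(x,y) \<in> (avoid Er d)\<^sup>* \<Longrightarrow> (x,y) \<in> (avoid (edg V Q) d2)\<^sup>*"
proof (induction rule: rtrancl_induct)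
  case base then show ?case by simp
next
  case (step y z)
  then have zd: "z \<noteq> d" and e: "(y,z) \<in> Er" using avoid_def by auto
  then have yz: "y \<in> V - A" "z \<in> V - A" "0 < Q y z"
    using Er_iff by auto
  then have "(y,z) \<in> avoid (edg V Q) d2" using d2A edg_def avoid_def by auto
  then show ?case using step by auto
qed

lemma DT3:
  assumes d2A: "d2 \<in> A" and dp2: "d = p2" and r: "(p2,c) \<in> (edg V Q)\<^sup>*" and cA: "c \<notin> A"
  shows "(p2,c) \<in> (avoid (edg V Q) d2)\<^sup>*"
proof -
  have r': "(p2,c) \<in> (avoid (edg V Q) d)\<^sup>*" using avoid_self[OF r] dp2 by simp
  have "\<And>y. (p2,y) \<in> (avoid (edg V Q) d)\<^sup>* \<Longrightarrow> y \<in> A \<or> (p2,y) \<in> (avoid (edg V Q) d2)\<^sup>*"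
  proof -
    fix y assume "(p2,y) \<in> (avoid (edg V Q) d)\<^sup>*"
    then show "y \<in> A \<or> (p2,y) \<in> (avoid (edg V Q) d2)\<^sup>*"
    proof (induction rule: rtrancl_induct)
      case base then show ?case by simp
    next
      case (step y z)
      then have e: "(y,z) \<in> edg V Q" and zd: "z \<noteq> d" using avoid_def by auto
      show ?case
      proof (cases "y \<in> A")
        case True
        then show ?thesis using cloE[OF True e] zd by auto
      next
        case False
        then have "(p2,y) \<in> (avoid (edg V Q) d2)\<^sup>*" using step by auto
        then show ?thesis using e d2A avoid_def
          by (cases "z = d2") (auto intro: rtrancl.rtrancl_into_rtrancl)
      qed
    qed
  qed
  then show ?thesis using r' cA by blast
qed

end


lemma bal_cong:
  assumes "\<forall>u\<in>V. \<forall>v\<in>V. Q u v = Q' u v" and "bal V Q z"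
  shows "bal V Q' z"
  using assms unfolding bal_def by (auto cong: sum.cong)

lemma edg_cong:
  assumes "\<forall>u\<in>V. \<forall>v\<in>V. (0 < Q u v) = (0 < Q' u v)"
  shows "edg V Q = edg V Q'"
  using assms unfolding edg_def by auto

lemma main_inv:
  assumes "finite V" "\<forall>u v. 0 \<le> Q u v" "\<forall>u v. 0 \<le> Q' u v"
    "\<forall>u\<in>V. \<forall>v\<in>V. (0 < Q u v) = (0 < Q' u v)"
    "\<forall>u\<in>V-P. \<forall>v\<in>V. Q u v = Q' u v"
    "symr (edg V Q)" "\<forall>v\<in>V. 0 < z v" "\<forall>v\<in>V. 0 < z' v"
    "bal V Q z" "bal V Q' z'" "P \<subseteq> V" "CR \<subseteq> V - P"
    "\<forall>p\<in>P. \<exists>d\<in>V. d \<noteq> p \<and> (\<forall>c\<in>CR. (p,c) \<notin> (avoid (edg V Q) d)\<^sup>*)"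
    "a \<in> CR" "b \<in> CR" "(a,b) \<in> (edg V Q)\<^sup>*"
  shows "z' a / z a = z' b / z b"
  using assms
proof (induction "card P" arbitrary: V Q Q' P z z' rule: less_induct)
  case less
  note fin = less.prems(1) and nn = less.prems(2) and nn' = less.prems(3)
    and supp = less.prems(4) and rows = less.prems(5) and sy = less.prems(6)
    and zp = less.prems(7) and zp' = less.prems(8) and b1 = less.prems(9) and b2 = less.prems(10)
    and PV = less.prems(11) and CRV = less.prems(12) and dom = less.prems(13)
    and aC = less.prems(14) and bC = less.prems(15) and ab = less.prems(16)
  show ?case
  proof (cases "P = {}")
    case True
    then have "bal V Q z'" using bal_cong[OF _ b2] rows by auto
    then show ?thesis using uniq[OF fin nn zp zp' b1 _ sy _ ab] CRV aC by auto
  next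
    case False
    then obtain p where pP: "p \<in> P" by blast
    obtain d where dV: "d \<in> V" and dp: "d \<noteq> p" and domp: "\<forall>c\<in>CR. (p,c) \<notin> (avoid (edg V Q) d)\<^sup>*"
      using dom pP by blast
    have pV: "p \<in> V" using pP PV by auto
    define A where "A = {v\<in>V. (p,v) \<in> (avoid (edg V Q) d)\<^sup>*}"
    have eqE: "edg V Q = edg V Q'" using edg_cong[OF supp] .
    have sy': "symr (edg V Q')" using sy eqE by simp
    have A_def': "A = {v\<in>V. (p,v) \<in> (avoid (edg V Q') d)\<^sup>*}" using A_def eqE by simp
    note ctx = fin nn sy pV dV dp A_def
    note ctx' = fin nn' sy' pV dV dp A_def'
    define V' where "V' = V - A"
    define P' where "P' = P - A"
    have AV: "A \<subseteq> V" using AV[OF ctx] .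
    have fA: "finite A" using fA[OF ctx] .
    have dA: "d \<notin> A" using dA[OF ctx] .
    have pA: "p \<in> A" using pA[OF ctx] .
    have cardlt: "card P' < card P"
    proof -
      have fP: "finite P" using finite_subset[OF PV fin] .
      have "P - A \<subset> P" using pP pA by blast
      then show ?thesis unfolding P'_def using psubset_card_mono[OF fP] by blast
    qed
    have CRA: "CR \<inter> A = {}" using domp A_def by auto
    have b1': "bal V' (red A Q d) z" unfolding V'_def
      using red_bal[OF fin AV dV dA clo[OF ctx] b1] .
    have b2': "bal V' (red A Q' d) z'" unfolding V'_def
      using red_bal[OF fin AV dV dA clo[OF ctx'] b2] .
    have nnr: "\<forall>u v. 0 \<le> red A Q d u v" using red_nn[OF nn] .
    have nnr': "\<forall>u v. 0 \<le> red A Q' d u v" using red_nn[OF nn'] .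
    have suppr: "\<forall>u\<in>V'. \<forall>v\<in>V'. (0 < red A Q d u v) = (0 < red A Q' d u v)"
      unfolding red_pos[OF nn fA] red_pos[OF nn' fA] using supp AV V'_def by auto
    have rowsr: "\<forall>u\<in>V'-P'. \<forall>v\<in>V'. red A Q d u v = red A Q' d u v"
    proof (intro ballI)
      fix u v assume u: "u \<in> V' - P'" and v: "v \<in> V'"
      then have uVP: "u \<in> V - P" using V'_def P'_def by auto
      have "\<forall>x\<in>V. Q u x = Q' u x" using rows uVP by auto
      then have e: "\<forall>x\<in>V. Q u x = Q' u x" .
      have "sum (Q u) A = sum (Q' u) A" using e AV by (intro sum.cong) auto
      moreover have "Q u v = Q' u v" using e v V'_def by auto
      ultimately show "red A Q d u v = red A Q' d u v"
        unfolding red_def by simp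
    qed
    have syr: "symr (edg V' (red A Q d))" unfolding V'_def using symr_red[OF ctx] .
    have P'V: "P' \<subseteq> V'" using PV V'_def P'_def by auto
    have CRV': "CR \<subseteq> V' - P'" using CRV CRA V'_def P'_def by auto
    have domr: "\<forall>p2\<in>P'. \<exists>d'\<in>V'. d' \<noteq> p2 \<and> (\<forall>c\<in>CR. (p2,c) \<notin> (avoid (edg V' (red A Q d)) d')\<^sup>*)"
    proof
      fix p2 assume p2: "p2 \<in> P'"
      then have p2P: "p2 \<in> P" and p2A: "p2 \<notin> A" using P'_def by auto
      obtain d2 where d2V: "d2 \<in> V" and d2p: "d2 \<noteq> p2"
        and dom2: "\<forall>c\<in>CR. (p2,c) \<notin> (avoid (edg V Q) d2)\<^sup>*" using dom p2P by blast
      show "\<exists>d'\<in>V'. d' \<noteq> p2 \<and> (\<forall>c\<in>CR. (p2,c) \<notin> (avoid (edg V' (red A Q d)) d')\<^sup>*)"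
      proof (cases "d2 \<in> A")
        case False
        have "\<forall>c\<in>CR. (p2,c) \<notin> (avoid (edg V' (red A Q d)) d2)\<^sup>*"
          using DT1[OF ctx False] dom2 V'_def by blast
        then show ?thesis using False d2V d2p V'_def by auto
      next
        case True
        show ?thesis
        proof (cases "d = p2")
          case False
          have "\<forall>c\<in>CR. (p2,c) \<notin> (avoid (edg V' (red A Q d)) d)\<^sup>*"
            using DT2[OF ctx True] dom2 V'_def by blast
          then show ?thesis using False dV dA V'_def by auto
        next
          case dp2: True
          have nr: "\<forall>c\<in>CR. (p2,c) \<notin> (edg V' (red A Q d))\<^sup>*"
          proof (intro ballI notI)
            fix c assume cC: "c \<in> CR" and r: "(p2,c) \<in> (edg V' (red A Q d))\<^sup>*"
            have "(p2,c) \<in> (edg V Q)\<^sup>*" using L2[OF ctx] r V'_def by auto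
            then have "(p2,c) \<in> (avoid (edg V Q) d2)\<^sup>*" using DT3[OF ctx True dp2] cC CRA by auto
            then show False using dom2 cC by auto
          qed
          have "avoid (edg V' (red A Q d)) a \<subseteq> edg V' (red A Q d)" using avoid_def by auto
          then have "\<forall>c\<in>CR. (p2,c) \<notin> (avoid (edg V' (red A Q d)) a)\<^sup>*"
            using nr rtrancl_mono by blast
          moreover have "a \<in> V'" "a \<noteq> p2" using aC CRV' p2 by auto
          ultimately show ?thesis by blast
        qed
      qed
    qed
    have aV': "a \<in> V'" using aC CRV' by auto
    have bV': "b \<in> V'" using bC CRV' by auto
    have abr: "(a,b) \<in> (edg V' (red A Q d))\<^sup>*"
      using L1[OF ctx ab] aV' bV' V'_def by auto
    have fV': "finite V'" using fin V'_def by auto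
    have zpr: "\<forall>v\<in>V'. 0 < z v" "\<forall>v\<in>V'. 0 < z' v" using zp zp' V'_def by auto
    show ?thesis
      using less.hyps[OF cardlt fV' nnr nnr' suppr rowsr syr zpr b1' b2' P'V CRV' domr aC bC abr] .
  qed
qed



lemma linked_equiv: "equiv {..<m} (linked m R)"
proof -
  have sy: "sym ((R \<union> R\<inverse>)\<^sup>*)" by (rule sym_rtrancl) (auto simp: sym_def)
  show ?thesis unfolding equiv_def refl_on_def sym_def trans_def linked_def
    using sy by (auto simp: sym_def intro: rtrancl_trans)
qed

lemma linked_stoich:
  "(i,j) \<in> (R \<union> R\<inverse>)\<^sup>* \<Longrightarrow> y j - y i \<in> stoich_space y R"
proof (induction rule: rtrancl_induct)
  case base then show ?case by (simp add: stoich_space_def span_zero)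
next
  case (step j k)
  have "y k - y j \<in> stoich_space y R"
  proof (cases "(j,k) \<in> R")
    case True
    then show ?thesis unfolding stoich_space_def by (intro span_base) blast
  next
    case False
    then have "(k,j) \<in> R" using step by auto
    then have "y j - y k \<in> stoich_space y R" unfolding stoich_space_def by (intro span_base) blast
    then have "- (y j - y k) \<in> stoich_space y R" unfolding stoich_space_def by (rule span_neg)
    then show ?thesis by simp
  qed
  then have "(y j - y i) + (y k - y j) \<in> stoich_space y R"
    using step unfolding stoich_space_def by (intro span_add) auto
  then show ?case by simp
qed

lemma defzero_inj:
  fixes yt :: "nat \<Rightarrow> real^'s::finite"
  assumes RB: "Rt \<subseteq> {..<mt} \<times> {..<mt}" and def0: "deficiency mt yt Rt = 0"
    and Ksum: "\<forall>K \<in> {..<mt} // linked mt Rt. (\<Sum>v\<in>K. N v) = 0"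
    and tot: "(\<Sum>v<mt. N v *\<^sub>R yt v) = 0"
  shows "\<forall>v<mt. N v = 0"
proof -
  define L where "L = linked mt Rt"
  define CL where "CL = {..<mt} // L"
  have eqv: "equiv {..<mt} L" using linked_equiv L_def by simp
  have fCL: "finite CL" unfolding CL_def L_def linked_def by (rule finite_quotient) auto
  define rep where "rep K = (SOME v. v \<in> K)" for K :: "nat set"
  define cls where "cls v = L `` {v}" for v
  have Kne: "\<And>K. K \<in> CL \<Longrightarrow> rep K \<in> K"
  proof -
    fix K assume "K \<in> CL"
    then obtain x where "K = L``{x}" "x < mt" unfolding CL_def by (auto elim: quotientE)
    then have "x \<in> K" using eqv by (auto simp: equiv_def refl_on_def)
    then show "rep K \<in> K" unfolding rep_def by (rule someI)
  qed
  have Ksub: "\<And>K. K \<in> CL \<Longrightarrow> K \<subseteq> {..<mt}" using in_quotient_imp_subset[OF eqv] CL_def by auto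
  have clsK: "\<And>K v. K \<in> CL \<Longrightarrow> v \<in> K \<Longrightarrow> cls v = K"
  proof -
    fix K v assume "K \<in> CL" "v \<in> K"
    then obtain x where Kx: "K = L``{x}" "x < mt" unfolding CL_def by (auto elim: quotientE)
    then have "(x,v) \<in> L" using \<open>v \<in> K\<close> by auto
    then show "cls v = K" using equiv_class_eq[OF eqv] Kx cls_def by metis
  qed
  have clsCL: "\<And>v. v < mt \<Longrightarrow> cls v \<in> CL" unfolding cls_def CL_def by (auto intro: quotientI)
  have vcls: "\<And>v. v < mt \<Longrightarrow> v \<in> cls v" unfolding cls_def using eqv by (auto simp: equiv_def refl_on_def)
  define g where "g v = yt v - yt (rep (cls v))" for v
  define reps where "reps = rep ` CL"
  define NR where "NR = {..<mt} - reps"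
  have repsub: "reps \<subseteq> {..<mt}" using Kne Ksub reps_def by auto
  have injrep: "inj_on rep CL"
    by (rule inj_onI) (metis Kne clsK)
  have cardreps: "card reps = card CL" unfolding reps_def using card_image[OF injrep] .
  have cardNR: "card NR = mt - card CL" unfolding NR_def using card_Diff_subset[OF _ repsub] cardreps
    by (metis card_lessThan finite_subset finite_lessThan repsub)
  have grp: "(\<Sum>v<mt. N v *\<^sub>R yt (rep (cls v))) = 0"
  proof -
    have "(\<Sum>v<mt. N v *\<^sub>R yt (rep (cls v))) = (\<Sum>K\<in>CL. \<Sum>v\<in>{v\<in>{..<mt}. cls v = K}. N v *\<^sub>R yt (rep (cls v)))"
    proof -
      have "cls ` {..<mt} \<subseteq> CL" using clsCL by auto
      from sum.group[OF _ fCL this, of "\<lambda>v. N v *\<^sub>R yt (rep (cls v))"]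
      show ?thesis by simp
    qed
    also have "\<dots> = (\<Sum>K\<in>CL. (\<Sum>v\<in>K. N v) *\<^sub>R yt (rep K))"
    proof (rule sum.cong)
      fix K assume KC: "K \<in> CL"
      have "{v\<in>{..<mt}. cls v = K} = K" using clsK[OF KC] Ksub[OF KC] vcls by auto
      then show "(\<Sum>v\<in>{v\<in>{..<mt}. cls v = K}. N v *\<^sub>R yt (rep (cls v))) = (\<Sum>v\<in>K. N v) *\<^sub>R yt (rep K)"
        using clsK[OF KC] by (simp add: scaleR_sum_left)
    qed simp
    also have "\<dots> = 0" using Ksum CL_def L_def by simp
    finally show ?thesis .
  qed
  have s2: "(\<Sum>v<mt. N v *\<^sub>R g v) = 0"
    unfolding g_def using tot grp by (simp add: scaleR_diff_right sum_subtractf)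
  have greps: "\<And>v. v \<in> reps \<Longrightarrow> g v = 0"
    unfolding reps_def g_def using clsK Kne by auto
  have s3: "(\<Sum>v\<in>NR. N v *\<^sub>R g v) = 0"
  proof -
    have "(\<Sum>v<mt. N v *\<^sub>R g v) = (\<Sum>v\<in>NR. N v *\<^sub>R g v) + (\<Sum>v\<in>reps. N v *\<^sub>R g v)"
      unfolding NR_def using sum.subset_diff[OF repsub] by auto
    then show ?thesis using s2 greps by simp
  qed
  define S where "S = stoich_space yt Rt"
  have gS: "g ` NR \<subseteq> S"
  proof
    fix w assume "w \<in> g ` NR"
    then obtain v where v: "v \<in> NR" "w = g v" by auto
    then have vm: "v < mt" using NR_def by auto
    have "rep (cls v) \<in> cls v" using Kne clsCL vm by auto
    then have "(v, rep (cls v)) \<in> (Rt \<union> Rt\<inverse>)\<^sup>*" unfolding cls_def L_def linked_def by auto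
    then have "yt (rep (cls v)) - yt v \<in> S" using linked_stoich S_def by auto
    then have "- (yt (rep (cls v)) - yt v) \<in> S" unfolding S_def stoich_space_def by (rule span_neg)
    then show "w \<in> S" using v g_def by simp
  qed
  have gspan: "\<And>v. v < mt \<Longrightarrow> g v \<in> span (g ` NR)"
  proof -
    fix v assume "v < mt"
    show "g v \<in> span (g ` NR)"
    proof (cases "v \<in> reps")
      case True then show ?thesis using greps span_zero by auto
    next
      case False then have "v \<in> NR" using NR_def \<open>v<mt\<close> by auto
      then show ?thesis by (intro span_base) auto
    qed
  qed
  have Sspan: "S \<subseteq> span (g ` NR)"
    unfolding S_def stoich_space_def
  proof (rule span_minimal)
    show "subspace (span (g ` NR))" by (rule subspace_span)
    show "{yt j - yt i |i j. (i, j) \<in> Rt} \<subseteq> span (g ` NR)"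
    proof
      fix w assume "w \<in> {yt j - yt i |i j. (i, j) \<in> Rt}"
      then obtain i j where ij: "(i,j) \<in> Rt" "w = yt j - yt i" by auto
      then have im: "i < mt" "j < mt" using RB by auto
      then have "(i,j) \<in> L" unfolding L_def linked_def using ij by auto
      then have "cls i = cls j" unfolding cls_def using equiv_class_eq[OF eqv] by auto
      then have "w = g j - g i" using ij g_def by simp
      then show "w \<in> span (g ` NR)" using gspan im span_diff by metis
    qed
  qed
  have dimS: "dim S = mt - card CL"
  proof -
    have "int mt - int (card CL) - int (dim S) = 0"
      using def0 unfolding deficiency_def n_linkage_def CL_def L_def S_def by simp
    then show ?thesis by linarith
  qed
  have fNR: "finite NR" using NR_def by auto
  have c1: "card (g ` NR) \<le> card NR" using card_image_le[OF fNR] .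
  have c2: "dim S \<le> card (g ` NR)" using dim_le_card[OF Sspan] fNR by auto
  have cardeq: "card (g ` NR) = card NR" using c1 c2 dimS cardNR by linarith
  have injg: "inj_on g NR" using eq_card_imp_inj_on[OF fNR cardeq] .
  have ind: "independent (g ` NR)"
    using card_le_dim_spanning[OF gS Sspan] fNR c1 c2 dimS cardNR cardeq by auto
  have NRz: "\<forall>v\<in>NR. N v = 0"
  proof
    fix v assume vN: "v \<in> NR"
    define u where "u w = N (the_inv_into NR g w)" for w
    have "(\<Sum>w\<in>g ` NR. u w *\<^sub>R w) = (\<Sum>x\<in>NR. u (g x) *\<^sub>R g x)"
      using sum.reindex[OF injg] by simp
    also have "\<dots> = (\<Sum>x\<in>NR. N x *\<^sub>R g x)"
      unfolding u_def using the_inv_into_f_f[OF injg] by (auto intro: sum.cong)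
    finally have "(\<Sum>w\<in>g ` NR. u w *\<^sub>R w) = 0" using s3 by simp
    then have "u (g v) = 0" using dependent_finite[of "g ` NR"] ind fNR vN by auto
    then show "N v = 0" unfolding u_def using the_inv_into_f_f[OF injg vN] by simp
  qed
  show ?thesis
  proof (intro allI impI)
    fix v assume vm: "v < mt"
    show "N v = 0"
    proof (cases "v \<in> NR")
      case True then show ?thesis using NRz by auto
    next
      case False
      then have "v \<in> reps" using NR_def vm by auto
      then obtain K where KC: "K \<in> CL" and vK: "v = rep K" using reps_def by auto
      have "\<forall>x\<in>K - {v}. N x = 0"
      proof
        fix x assume x: "x \<in> K - {v}"
        have "x \<notin> reps"
        proof
          assume "x \<in> reps"
          then obtain K' where "K' \<in> CL" "x = rep K'" using reps_def by auto
          then have "K' = K" using clsK[OF KC] clsK Kne x by (metis DiffD1)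
          then show False using x vK \<open>x = rep K'\<close> by auto
        qed
        then have "x \<in> NR" using x Ksub[OF KC] NR_def by auto
        then show "N x = 0" using NRz by auto
      qed
      moreover have "(\<Sum>x\<in>K. N x) = 0" using Ksum KC CL_def L_def by auto
      moreover have "finite K" using Ksub[OF KC] finite_subset by blast
      moreover have "v \<in> K" using Kne KC vK by auto
      ultimately show ?thesis using sum.remove[of K v N] by simp
    qed
  qed
qed



lemma flux_ident:
  fixes yt :: "nat \<Rightarrow> real^'s::finite"
  shows "(\<Sum>u<mt. \<Sum>v<mt. F u v *\<^sub>R (yt v - yt u)) =
         (\<Sum>v<mt. ((\<Sum>u<mt. F u v) - (\<Sum>w<mt. F v w)) *\<^sub>R yt v)"
proof -
  have "(\<Sum>u<mt. \<Sum>v<mt. F u v *\<^sub>R (yt v - yt u)) =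
        (\<Sum>u<mt. \<Sum>v<mt. F u v *\<^sub>R yt v) - (\<Sum>u<mt. \<Sum>v<mt. F u v *\<^sub>R yt u)"
    by (simp add: scaleR_diff_right sum_subtractf)
  also have "(\<Sum>u<mt. \<Sum>v<mt. F u v *\<^sub>R yt v) = (\<Sum>v<mt. (\<Sum>u<mt. F u v) *\<^sub>R yt v)"
    by (subst sum.swap) (simp add: scaleR_sum_left)
  also have "(\<Sum>u<mt. \<Sum>v<mt. F u v *\<^sub>R yt u) = (\<Sum>v<mt. (\<Sum>w<mt. F v w) *\<^sub>R yt v)"
    by (simp add: scaleR_sum_left)
  finally show ?thesis by (simp add: scaleR_diff_left sum_subtractf)
qed

lemma flux_bal:
  fixes yt :: "nat \<Rightarrow> real^'s::finite"
  assumes RB: "Rt \<subseteq> {..<mt} \<times> {..<mt}" and def0: "deficiency mt yt Rt = 0"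
    and supp: "\<forall>u v. F u v \<noteq> 0 \<longrightarrow> (u,v) \<in> Rt"
    and z: "(\<Sum>u<mt. \<Sum>v<mt. F u v *\<^sub>R (yt v - yt u)) = 0"
  shows "\<forall>v<mt. (\<Sum>w<mt. F v w) = (\<Sum>u<mt. F u v)"
proof -
  define N where "N v = (\<Sum>u<mt. F u v) - (\<Sum>w<mt. F v w)" for v
  have tot: "(\<Sum>v<mt. N v *\<^sub>R yt v) = 0" using z flux_ident[of F yt mt] N_def by simp
  have eqv: "equiv {..<mt} (linked mt Rt)" by (rule linked_equiv)
  have Ks: "\<forall>K \<in> {..<mt} // linked mt Rt. (\<Sum>v\<in>K. N v) = 0"
  proof
    fix K assume KC: "K \<in> {..<mt} // linked mt Rt"
    then obtain x where Kx: "K = linked mt Rt `` {x}" "x < mt" by (auto elim: quotientE)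
    have Ksub: "K \<subseteq> {..<mt}" using in_quotient_imp_subset[OF eqv KC] .
    have fK: "finite K" using Ksub finite_subset by blast
    have clos: "\<And>u v. (u,v) \<in> Rt \<Longrightarrow> (u \<in> K \<longleftrightarrow> v \<in> K)"
    proof -
      fix u v assume uv: "(u,v) \<in> Rt"
      then have l: "(u,v) \<in> linked mt Rt" using RB unfolding linked_def by auto
      then have l': "(v,u) \<in> linked mt Rt" using eqv by (auto simp: equiv_def sym_def)
      show "u \<in> K \<longleftrightarrow> v \<in> K" using Kx l l' eqv by (auto simp: equiv_def trans_def)
    qed
    have z1: "\<forall>u v. u \<notin> K \<longrightarrow> v \<in> K \<longrightarrow> F u v = 0" using supp clos by blast
    have z2: "\<forall>u v. u \<in> K \<longrightarrow> v \<notin> K \<longrightarrow> F u v = 0" using supp clos by blast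
    have in1: "(\<Sum>u<mt. F u v) = (\<Sum>u\<in>K. F u v)" if vK: "v \<in> K" for v
      by (rule sum.mono_neutral_right) (use Ksub z1 vK in auto)
    have out1: "(\<Sum>w<mt. F v w) = (\<Sum>w\<in>K. F v w)" if vK: "v \<in> K" for v
      by (rule sum.mono_neutral_right) (use Ksub z2 vK in auto)
    have "(\<Sum>v\<in>K. N v) = (\<Sum>v\<in>K. \<Sum>u\<in>K. F u v) - (\<Sum>v\<in>K. \<Sum>w\<in>K. F v w)"
      unfolding N_def using in1 out1 by (simp add: sum_subtractf)
    also have "\<dots> = 0" by (subst sum.swap) simp
    finally show "(\<Sum>v\<in>K. N v) = 0" .
  qed
  have "\<forall>v<mt. N v = 0" using defzero_inj[OF RB def0 Ks tot] .
  then show ?thesis using N_def by simp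
qed

lemma bal_flux_sum:
  fixes yt :: "nat \<Rightarrow> real^'s::finite"
  assumes RB: "Rt \<subseteq> {..<mt} \<times> {..<mt}" and def0: "deficiency mt yt Rt = 0"
    and supp: "\<forall>u v. Q u v * z u \<noteq> 0 \<longrightarrow> (u,v) \<in> Rt"
  shows "(\<Sum>u<mt. \<Sum>v<mt. (Q u v * z u) *\<^sub>R (yt v - yt u)) = 0 \<longleftrightarrow> bal {..<mt} Q z"
proof
  assume "(\<Sum>u<mt. \<Sum>v<mt. (Q u v * z u) *\<^sub>R (yt v - yt u)) = 0"
  from flux_bal[OF RB def0 supp this] show "bal {..<mt} Q z"
    unfolding bal_def by (simp add: sum_distrib_left algebra_simps)
next
  assume "bal {..<mt} Q z"
  then have "\<forall>v<mt. (\<Sum>u<mt. Q u v * z u) - (\<Sum>w<mt. Q v w * z v) = 0"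
    unfolding bal_def by (simp add: sum_distrib_left algebra_simps)
  then show "(\<Sum>u<mt. \<Sum>v<mt. (Q u v * z u) *\<^sub>R (yt v - yt u)) = 0"
    using flux_ident[of "\<lambda>u v. Q u v * z u" yt mt] by simp
qed

lemma A_mat_alt:
  assumes "k l l = 0"
  shows "A_mat m k i l = k l i - (if i = l then (\<Sum>j<m. k l j) else 0)"
  using assms unfolding A_mat_def by auto

lemma rhs_expand:
  fixes y yK :: "nat \<Rightarrow> real^'s::finite"
  assumes kd: "\<forall>i. k i i = 0"
  shows "gma_rhs m y yK k x = (\<Sum>l<m. Psi yK x l *\<^sub>R (\<Sum>j<m. k l j *\<^sub>R (y j - y l)))"
proof (rule vec_eq_iff[THEN iffD2], rule allI)
  fix s
  have "gma_rhs m y yK k x $ s = (\<Sum>i<m. (y i $ s) * (\<Sum>l<m. A_mat m k i l * Psi yK x l))"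
    unfolding gma_rhs_def by simp
  also have "\<dots> = (\<Sum>l<m. Psi yK x l * (\<Sum>i<m. A_mat m k i l * (y i $ s)))"
    by (simp add: sum_distrib_left sum_distrib_right algebra_simps) (subst sum.swap, simp)
  also have "\<dots> = (\<Sum>l<m. Psi yK x l * (\<Sum>j<m. k l j * (y j $ s - y l $ s)))"
  proof (rule sum.cong)
    fix l assume lm: "l \<in> {..<m}"
    have "(\<Sum>i<m. A_mat m k i l * (y i $ s)) = (\<Sum>i<m. k l i * (y i $ s) - (if i = l then (\<Sum>j<m. k l j) * (y i $ s) else 0))"
      by (rule sum.cong) (auto simp: A_mat_def kd)
    also have "\<dots> = (\<Sum>i<m. k l i * (y i $ s)) - (\<Sum>i<m. (if i = l then (\<Sum>j<m. k l j) * (y i $ s) else 0))"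
      by (rule sum_subtractf)
    also have "(\<Sum>i<m. k l i * (y i $ s)) - (\<Sum>i<m. (if i = l then (\<Sum>j<m. k l j) * (y i $ s) else 0)) = (\<Sum>i<m. k l i * (y i $ s)) - (\<Sum>j<m. k l j) * (y l $ s)"
      using lm by (simp add: sum.delta)
    finally have e: "(\<Sum>i<m. A_mat m k i l * (y i $ s)) = (\<Sum>i<m. k l i * (y i $ s)) - (\<Sum>j<m. k l j) * (y l $ s)" .
    have "(\<Sum>j<m. k l j * (y j $ s - y l $ s)) = (\<Sum>i<m. k l i * (y i $ s)) - (\<Sum>j<m. k l j) * (y l $ s)"
      by (simp add: right_diff_distrib sum_subtractf sum_distrib_right)
    then show "Psi yK x l * (\<Sum>i<m. A_mat m k i l * (y i $ s)) = Psi yK x l * (\<Sum>j<m. k l j * (y j $ s - y l $ s))"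
      using e by simp
  qed simp
  also have "\<dots> = (\<Sum>l<m. Psi yK x l *\<^sub>R (\<Sum>j<m. k l j *\<^sub>R (y j - y l))) $ s"
    by (simp add: sum_component)
  finally show "gma_rhs m y yK k x $ s = (\<Sum>l<m. Psi yK x l *\<^sub>R (\<Sum>j<m. k l j *\<^sub>R (y j - y l))) $ s" .
qed

definition lnv :: "real^'s::finite \<Rightarrow> real^'s" where "lnv x = (\<chi> s. ln (x $ s))"

lemma Psi_exp:
  fixes yK :: "nat \<Rightarrow> real^'s::finite"
  assumes "\<forall>s. 0 < x $ s"
  shows "Psi yK x i = exp (yK i \<bullet> lnv x)"
proof -
  have "Psi yK x i = (\<Prod>s\<in>UNIV. exp (yK i $ s * ln (x $ s)))"
  proof -
    have "\<forall>s. x $ s \<noteq> 0" using assms by (metis less_irrefl)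
    then show ?thesis unfolding Psi_def by (intro prod.cong) (auto simp: powr_def)
  qed
  also have "\<dots> = exp (\<Sum>s\<in>UNIV. yK i $ s * ln (x $ s))" by (simp add: exp_sum)
  finally show ?thesis unfolding lnv_def inner_vec_def by simp
qed



lemma sum_pos_iff:
  fixes f :: "'a \<Rightarrow> real"
  assumes "finite S" "\<forall>i\<in>S. 0 \<le> f i"
  shows "(0 < sum f S) \<longleftrightarrow> (\<exists>i\<in>S. 0 < f i)"
proof
  assume "0 < sum f S"
  then have "sum f S \<noteq> 0" by simp
  then obtain i where "i \<in> S" "f i \<noteq> 0" using sum.neutral by metis
  then show "\<exists>i\<in>S. 0 < f i" using assms(2) by (auto simp: less_le)
next
  assume "\<exists>i\<in>S. 0 < f i"
  then obtain i where iS: "i \<in> S" and "0 < f i" by blast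
  moreover have "f i \<le> sum f S" using member_le_sum[OF iS] assms by auto
  ultimately show "0 < sum f S" by linarith
qed

lemma dom_transfer:
  assumes kp: "k \<noteq> p" and dom: "\<forall>c\<in>CR. \<forall>xs. is_path R xs p c \<longrightarrow> k \<in> set xs"
  shows "\<forall>c\<in>CR. (p,c) \<notin> (avoid R k)\<^sup>*"
proof (intro ballI notI)
  fix c assume cC: "c \<in> CR" and r: "(p,c) \<in> (avoid R k)\<^sup>*"
  define rr where "rr = (\<lambda>x y. (x,y) \<in> avoid R k)"
  have "rr\<^sup>*\<^sup>* p c" using r unfolding rr_def by (simp add: rtranclp_rtrancl_eq)
  then obtain xs where "rtrancl_path rr p xs c" using rtranclp_eq_rtrancl_path by metis
  then obtain xs' where rp: "rtrancl_path rr p xs' c" and dis: "distinct (p # xs')"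
    using rtrancl_path_distinct by metis
  have lst: "last (p # xs') = c"
  proof (cases "xs' = []")
    case True then show ?thesis using rp by (auto elim: rtrancl_path.cases)
  next
    case False then show ?thesis using rtrancl_path_last[OF rp] by simp
  qed
  have steps: "\<forall>t. Suc t < length (p # xs') \<longrightarrow> ((p # xs') ! t, (p # xs') ! Suc t) \<in> R"
  proof (intro allI impI)
    fix t assume "Suc t < length (p # xs')"
    then have "t < length xs'" by simp
    then have "rr ((p # xs') ! t) (xs' ! t)" using rtrancl_path_nth[OF rp] by blast
    then show "((p # xs') ! t, (p # xs') ! Suc t) \<in> R" unfolding rr_def avoid_def by simp
  qed
  have "is_path R (p # xs') p c" unfolding is_path_def using dis lst steps by simp
  then have "k \<in> set (p # xs')" using dom cC by blast
  then have "k \<in> set xs'" using kp by simp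
  then have "Rangep rr k" using rtrancl_path_Range[OF rp] by blast
  then show False unfolding rr_def avoid_def by auto
qed

lemma wr_symr:
  assumes wr: "weakly_reversible mt Rt" and RB: "Rt \<subseteq> {..<mt} \<times> {..<mt}"
  shows "symr Rt"
  unfolding symr_def
proof (intro allI impI)
  fix u v assume r: "(u,v) \<in> Rt\<^sup>*"
  show "(v,u) \<in> Rt\<^sup>*"
  proof (cases "u = v")
    case False
    have um: "u < mt" using r False RB by (cases rule: converse_rtranclE) auto
    have vm: "v < mt" using r False RB by (cases rule: rtranclE) auto
    have "(u,v) \<in> (Rt \<union> Rt\<inverse>)\<^sup>*" using r rtrancl_mono[of Rt "Rt \<union> Rt\<inverse>"] by auto
    then have "(v,u) \<in> (Rt \<union> Rt\<inverse>)\<^sup>*"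
      using sym_rtrancl[of "Rt \<union> Rt\<inverse>"] by (auto simp: sym_def)
    then have "(v,u) \<in> linked mt Rt" using um vm linked_def by auto
    then show ?thesis using wr weakly_reversible_def by auto
  qed simp
qed



theorem lemma6p1:
  fixes y yt ytK :: "nat \<Rightarrow> real^'s::finite"
    and m mt :: nat and R Rt :: "(nat \<times> nat) set"
    and k bt lam :: "nat \<Rightarrow> nat \<Rightarrow> real" and h hK :: "nat \<Rightarrow> nat" and CR :: "nat set"
  assumes "crn m y R" and "rw_set R k"
    and "rw_translation m y R k mt yt ytK Rt bt h hK lam"
    and "\<not> inj_on h (kin_rel m y k)"
    and "weakly_reversible mt Rt"
    and "deficiency mt yt Rt = 0"
    and "S_I y (kin_rel m y k) h \<subseteq> kin_order_space ytK Rt"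
    and "resolving_set mt Rt (kin_rel mt yt bt) y (kin_rel m y k) h hK CR"
    and "C_I (kin_rel m y k) h \<inter> CR = {}"
    and "\<forall>p'\<in>C_I (kin_rel m y k) h. \<exists>k'\<in>kin_rel mt yt bt. k' \<noteq> p' \<and>
           (\<forall>i'\<in>CR. \<forall>xs. is_path Rt xs p' i' \<longrightarrow> k' \<in> set xs)"
  shows "\<exists>Kt. rw_set Rt Kt \<and> steady_states m y y k = steady_states mt yt ytK Kt"
proof -
  note crn = assms(1) and rwk = assms(2) and tr = assms(3) and wr = assms(5) and def0 = assms(6)
    and res = assms(8) and CIdisj = assms(9) and domh = assms(10)
  define rel where "rel = kin_rel m y k"
  define relt where "relt = kin_rel mt yt bt"
  define CI where "CI = C_I rel h"
  define V where "V = {..<mt}"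
  define fib where "fib u = {i\<in>rel. h i = u}" for u
  define D where "D x = lnv x" for x :: "real^'s"
  have crnt: "crn mt yt Rt" and rwt: "rw_set Rt bt" and himg: "h ` rel = relt"
    and lamp: "\<forall>i\<in>rel. \<forall>j'. 0 \<le> lam i j' \<and> (0 < lam i j' \<longrightarrow> (h i, j') \<in> Rt)"
    and btsum: "\<forall>i'\<in>relt. \<forall>j'. (\<Sum>i\<in>fib i'. lam i j') = bt i' j'"
    and neteq: "\<forall>i\<in>rel. (\<Sum>j\<in>{..<m} - {i}. k i j *\<^sub>R (y j - y i)) =
        (\<Sum>j'\<in>{..<mt} - {h i}. lam i j' *\<^sub>R (yt j' - yt (h i)))"
    and hKsub: "hK ` relt \<subseteq> rel" and hKp: "\<forall>i'\<in>relt. h (hK i') = i' \<and> ytK i' = y (hK i')"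
    using tr unfolding rw_translation_def rel_def relt_def fib_def by auto
  have RB: "Rt \<subseteq> {..<mt} \<times> {..<mt}" and noloopt: "\<forall>i. (i,i) \<notin> Rt"
    using crnt unfolding crn_def by blast+
  have noloop: "\<forall>i. (i,i) \<notin> R" using crn unfolding crn_def by blast
  have kd: "\<forall>i. k i i = 0" using rwk noloop rw_set_def by auto
  have relsub: "rel \<subseteq> {..<m}" unfolding rel_def kin_rel_def by auto
  have frel: "finite rel" using relsub finite_subset by blast
  have reltsub: "relt \<subseteq> {..<mt}" unfolding relt_def kin_rel_def by auto
  have bt_nn: "\<forall>u v. 0 \<le> bt u v" using rwt unfolding rw_set_def by (metis less_eq_real_def order_refl)
  have bt_pos: "\<forall>u v. (0 < bt u v) = ((u,v) \<in> Rt)" using rwt rw_set_def by auto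
  have bt_z: "\<forall>u v. (u,v) \<notin> Rt \<longrightarrow> bt u v = 0" using rwt rw_set_def by auto
  have ffib: "\<And>u. finite (fib u)" using frel fib_def by auto
  have fibrel: "\<And>u i. i \<in> fib u \<Longrightarrow> i \<in> rel \<and> h i = u" using fib_def by auto
  have NE: "\<And>u v. (u,v) \<in> Rt \<Longrightarrow> u \<in> relt"
  proof (rule ccontr)
    fix u v assume uv: "(u,v) \<in> Rt" and nu: "u \<notin> relt"
    have um: "u < mt" using uv RB by auto
    have z0: "(\<Sum>j\<in>{..<mt} - {u}. bt u j *\<^sub>R (yt j - yt u)) = 0"
      using nu um unfolding relt_def kin_rel_def by auto
    define F where "F a b = (if a = u then bt u b else 0)" for a b
    have suppF: "\<forall>a b. F a b \<noteq> 0 \<longrightarrow> (a,b) \<in> Rt"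
      unfolding F_def using bt_z by auto
    have "(\<Sum>a<mt. \<Sum>b<mt. F a b *\<^sub>R (yt b - yt a)) = (\<Sum>b<mt. bt u b *\<^sub>R (yt b - yt u))"
    proof -
      have "\<And>a. (\<Sum>b<mt. F a b *\<^sub>R (yt b - yt a)) = (if a = u then (\<Sum>b<mt. bt u b *\<^sub>R (yt b - yt u)) else 0)"
        unfolding F_def by simp
      then show ?thesis using um by (simp add: sum.delta)
    qed
    also have "\<dots> = (\<Sum>j\<in>{..<mt} - {u}. bt u j *\<^sub>R (yt j - yt u))"
      using um by (subst sum.remove[of "{..<mt}" u]) auto
    finally have "(\<Sum>a<mt. \<Sum>b<mt. F a b *\<^sub>R (yt b - yt a)) = 0" using z0 by simp
    from flux_bal[OF RB def0 suppF this] um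
    have "(\<Sum>w<mt. F u w) = (\<Sum>a<mt. F a u)" by auto
    also have "(\<Sum>a<mt. F a u) = bt u u" unfolding F_def using um by (simp add: sum.delta)
    also have "bt u u = 0" using bt_z noloopt by auto
    finally have s0: "(\<Sum>w<mt. bt u w) = 0" unfolding F_def by simp
    have "bt u v = 0" using iffD1[OF sum_nonneg_eq_0_iff s0] bt_nn uv RB by auto
    then show False using bt_pos[rule_format, of u v] uv by simp
  qed
  have fib_empty: "\<And>u. u \<notin> relt \<Longrightarrow> fib u = {}" using himg fib_def by auto
  have CIsub: "CI \<subseteq> relt" unfolding CI_def C_I_def using himg by auto
  have fib_proper: "\<And>u. u \<in> relt \<Longrightarrow> u \<notin> CI \<Longrightarrow> fib u = {hK u}"
  proof -
    fix u assume ur: "u \<in> relt" and uc: "u \<notin> CI"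
    have hK1: "hK u \<in> rel" using hKsub ur by auto
    have hK2: "h (hK u) = u" using hKp ur by auto
    have hKu: "hK u \<in> fib u" using hK1 hK2 by (simp add: fib_def)
    have "\<And>i. i \<in> fib u \<Longrightarrow> i = hK u"
    proof (rule ccontr)
      fix i assume i: "i \<in> fib u" and ne: "i \<noteq> hK u"
      have i1: "i \<in> rel" "h i = u" using i by (auto simp: fib_def)
      have "u \<in> C_I rel h" unfolding C_I_def using i1 hK1 hK2 ne by blast
      then show False using uc CI_def by simp
    qed
    then show "fib u = {hK u}" using hKu by blast
  qed
  define Qx where "Qx x u v = (\<Sum>i\<in>fib u. lam i v * exp ((y i - ytK u) \<bullet> D x))" for x u v
  have Qx_nn: "\<forall>u v. 0 \<le> Qx x u v" for x
    unfolding Qx_def using lamp fibrel by (auto intro!: sum_nonneg)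
  have Qx_pos: "\<forall>u v. (0 < Qx x u v) = ((u,v) \<in> Rt)" for x
  proof (intro allI)
    fix u v
    show "(0 < Qx x u v) = ((u,v) \<in> Rt)"
    proof (cases "u \<in> relt")
      case False
      then show ?thesis using fib_empty NE unfolding Qx_def by auto
    next
      case True
      have "(0 < Qx x u v) = (\<exists>i\<in>fib u. 0 < lam i v * exp ((y i - ytK u) \<bullet> D x))"
        unfolding Qx_def using sum_pos_iff[OF ffib] lamp fibrel by auto
      also have "\<dots> = (\<exists>i\<in>fib u. 0 < lam i v)" by (simp add: zero_less_mult_iff)
      also have "\<dots> = (0 < (\<Sum>i\<in>fib u. lam i v))" using sum_pos_iff[OF ffib] lamp fibrel by auto
      also have "\<dots> = (0 < bt u v)" using btsum True by auto
      finally show ?thesis using bt_pos by auto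
    qed
  qed
  have Qx_rows: "\<And>x u v. u \<notin> CI \<Longrightarrow> Qx x u v = bt u v"
  proof -
    fix x u v assume uc: "u \<notin> CI"
    show "Qx x u v = bt u v"
    proof (cases "u \<in> relt")
      case False
      then have "(u,v) \<notin> Rt" using NE by auto
      then show ?thesis using fib_empty[OF False] bt_z unfolding Qx_def by auto
    next
      case True
      have "Qx x u v = lam (hK u) v" unfolding Qx_def using fib_proper[OF True uc] hKp True by simp
      also have "\<dots> = bt u v" using btsum True fib_proper[OF True uc] by auto
      finally show ?thesis .
    qed
  qed
  have rw_Qx: "rw_set Rt (Qx x)" for x
    unfolding rw_set_def using Qx_pos[of x] Qx_nn[of x] by (metis less_eq_real_def)
  have ST: "x \<in> steady_states mt yt ytK Kt \<longleftrightarrow> (\<forall>s. 0 < x $ s) \<and> bal V Kt (Psi ytK x)"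
    if rwK: "rw_set Rt Kt" for Kt x
  proof -
    have Kd: "\<forall>i. Kt i i = 0" using rwK noloopt rw_set_def by auto
    have "gma_rhs mt yt ytK Kt x = (\<Sum>u<mt. Psi ytK x u *\<^sub>R (\<Sum>v<mt. Kt u v *\<^sub>R (yt v - yt u)))"
      using rhs_expand[of Kt, OF Kd] .
    also have "\<dots> = (\<Sum>u<mt. \<Sum>v<mt. (Kt u v * Psi ytK x u) *\<^sub>R (yt v - yt u))"
      by (simp add: scaleR_sum_right mult.commute)
    finally have e: "gma_rhs mt yt ytK Kt x = (\<Sum>u<mt. \<Sum>v<mt. (Kt u v * Psi ytK x u) *\<^sub>R (yt v - yt u))" .
    have supp: "\<forall>u v. Kt u v * Psi ytK x u \<noteq> 0 \<longrightarrow> (u,v) \<in> Rt"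
      using rwK rw_set_def by fastforce
    show ?thesis unfolding steady_states_def V_def using e bal_flux_sum[OF RB def0 supp] by auto
  qed
  have SO: "x \<in> steady_states m y y k \<longleftrightarrow> (\<forall>s. 0 < x $ s) \<and> bal V (Qx x) (Psi ytK x)" for x
  proof (cases "\<forall>s. 0 < x $ s")
    case False then show ?thesis unfolding steady_states_def by auto
  next
    case xp: True
    have Pfac: "Psi y x i = exp ((y i - ytK u) \<bullet> D x) * Psi ytK x u" for i u
      unfolding Psi_exp[OF xp] D_def by (simp add: inner_diff_left exp_diff)
    have "gma_rhs m y y k x = (\<Sum>l<m. Psi y x l *\<^sub>R (\<Sum>j<m. k l j *\<^sub>R (y j - y l)))"
      using rhs_expand[of k, OF kd] .
    also have "\<dots> = (\<Sum>l\<in>rel. Psi y x l *\<^sub>R (\<Sum>j<m. k l j *\<^sub>R (y j - y l)))"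
    proof (rule sum.mono_neutral_right)
      show "\<forall>l\<in>{..<m} - rel. Psi y x l *\<^sub>R (\<Sum>j<m. k l j *\<^sub>R (y j - y l)) = 0"
      proof
        fix l assume l: "l \<in> {..<m} - rel"
        have "(\<Sum>j<m. k l j *\<^sub>R (y j - y l)) = (\<Sum>j\<in>{..<m} - {l}. k l j *\<^sub>R (y j - y l))"
          using sum.remove[of "{..<m}" l "\<lambda>j. k l j *\<^sub>R (y j - y l)"] l by simp
        also have "\<dots> = 0" using l unfolding rel_def kin_rel_def by auto
        finally show "Psi y x l *\<^sub>R (\<Sum>j<m. k l j *\<^sub>R (y j - y l)) = 0" by simp
      qed
    qed (use relsub in auto)
    also have "\<dots> = (\<Sum>l\<in>rel. \<Sum>v<mt. (lam l v * Psi y x l) *\<^sub>R (yt v - yt (h l)))"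
    proof (rule sum.cong)
      fix l assume lr: "l \<in> rel"
      have hl: "h l < mt" using himg reltsub lr by auto
      have "(\<Sum>j<m. k l j *\<^sub>R (y j - y l)) = (\<Sum>j\<in>{..<m} - {l}. k l j *\<^sub>R (y j - y l))"
        using sum.remove[of "{..<m}" l "\<lambda>j. k l j *\<^sub>R (y j - y l)"] lr relsub by auto
      also have "\<dots> = (\<Sum>j'\<in>{..<mt} - {h l}. lam l j' *\<^sub>R (yt j' - yt (h l)))" using neteq lr by auto
      also have "\<dots> = (\<Sum>j'<mt. lam l j' *\<^sub>R (yt j' - yt (h l)))"
        using sum.remove[of "{..<mt}" "h l" "\<lambda>j'. lam l j' *\<^sub>R (yt j' - yt (h l))"] hl by simp
      finally show "Psi y x l *\<^sub>R (\<Sum>j<m. k l j *\<^sub>R (y j - y l)) = (\<Sum>v<mt. (lam l v * Psi y x l) *\<^sub>R (yt v - yt (h l)))"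
        by (simp add: scaleR_sum_right mult.commute)
    qed simp
    also have "\<dots> = (\<Sum>u<mt. \<Sum>l\<in>fib u. \<Sum>v<mt. (lam l v * Psi y x l) *\<^sub>R (yt v - yt (h l)))"
    proof -
      have "h ` rel \<subseteq> {..<mt}" using himg reltsub by auto
      from sum.group[OF frel _ this, of "\<lambda>l. \<Sum>v<mt. (lam l v * Psi y x l) *\<^sub>R (yt v - yt (h l))"]
      show ?thesis unfolding fib_def by simp
    qed
    also have "\<dots> = (\<Sum>u<mt. \<Sum>v<mt. (Qx x u v * Psi ytK x u) *\<^sub>R (yt v - yt u))"
    proof (rule sum.cong)
      fix u assume "u \<in> {..<mt}"
      have "(\<Sum>l\<in>fib u. \<Sum>v<mt. (lam l v * Psi y x l) *\<^sub>R (yt v - yt (h l))) =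
            (\<Sum>l\<in>fib u. \<Sum>v<mt. (lam l v * Psi y x l) *\<^sub>R (yt v - yt u))"
        using fibrel by (auto intro!: sum.cong)
      also have "\<dots> = (\<Sum>v<mt. (\<Sum>l\<in>fib u. lam l v * Psi y x l) *\<^sub>R (yt v - yt u))"
        by (subst sum.swap) (simp add: scaleR_sum_left)
      also have "\<dots> = (\<Sum>v<mt. (Qx x u v * Psi ytK x u) *\<^sub>R (yt v - yt u))"
        unfolding Qx_def Pfac[of _ u] by (simp add: sum_distrib_right mult.assoc)
      finally show "(\<Sum>l\<in>fib u. \<Sum>v<mt. (lam l v * Psi y x l) *\<^sub>R (yt v - yt (h l))) =
            (\<Sum>v<mt. (Qx x u v * Psi ytK x u) *\<^sub>R (yt v - yt u))" .
    qed simp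
    finally have e: "gma_rhs m y y k x = (\<Sum>u<mt. \<Sum>v<mt. (Qx x u v * Psi ytK x u) *\<^sub>R (yt v - yt u))" .
    have supp: "\<forall>u v. Qx x u v * Psi ytK x u \<noteq> 0 \<longrightarrow> (u,v) \<in> Rt"
      using Qx_pos[of x] Qx_nn[of x] by (metis less_eq_real_def mult_eq_0_iff)
    show ?thesis unfolding steady_states_def V_def using e bal_flux_sum[OF RB def0 supp] xp by auto
  qed
  have CRsub: "CR \<subseteq> relt" using res unfolding resolving_set_def relt_def by auto
  have CRV: "CR \<subseteq> V - CI" using CRsub reltsub CIdisj unfolding V_def CI_def rel_def by auto
  have symRt: "symr Rt" using wr_symr[OF wr RB] .
  have fV: "finite V" unfolding V_def by simp
  have CIV: "CI \<subseteq> V" using CIsub reltsub V_def by auto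
  have domV: "\<forall>p\<in>CI. \<exists>d\<in>V. d \<noteq> p \<and> (\<forall>c\<in>CR. (p,c) \<notin> (avoid Rt d)\<^sup>*)"
  proof
    fix p assume pC: "p \<in> CI"
    then obtain k' where k'r: "k' \<in> relt" and kp: "k' \<noteq> p"
      and dk: "\<forall>i'\<in>CR. \<forall>xs. is_path Rt xs p i' \<longrightarrow> k' \<in> set xs"
      using domh unfolding CI_def rel_def relt_def by blast
    show "\<exists>d\<in>V. d \<noteq> p \<and> (\<forall>c\<in>CR. (p,c) \<notin> (avoid Rt d)\<^sup>*)"
      using dom_transfer[OF kp dk] k'r reltsub kp V_def by blast
  qed
  have INV: "Qx x1 = Qx x2"
    if n1: "\<forall>u v. 0 \<le> Q1 u v" and s1: "\<forall>u\<in>V. \<forall>v\<in>V. (0 < Q1 u v) = ((u,v) \<in> Rt)"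
      and r1: "\<forall>u\<in>V-CI. \<forall>v\<in>V. Q1 u v = bt u v"
      and n2: "\<forall>u v. 0 \<le> Q2 u v" and s2: "\<forall>u\<in>V. \<forall>v\<in>V. (0 < Q2 u v) = ((u,v) \<in> Rt)"
      and r2: "\<forall>u\<in>V-CI. \<forall>v\<in>V. Q2 u v = bt u v"
      and x1p: "\<forall>s. 0 < x1 $ s" and x2p: "\<forall>s. 0 < x2 $ s"
      and b1: "bal V Q1 (Psi ytK x1)" and b2: "bal V Q2 (Psi ytK x2)"
    for Q1 Q2 x1 x2
  proof -
    have eE: "edg V Q1 = Rt" using s1 RB unfolding edg_def V_def by auto
    have supp12: "\<forall>u\<in>V. \<forall>v\<in>V. (0 < Q1 u v) = (0 < Q2 u v)" using s1 s2 by auto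
    have rows12: "\<forall>u\<in>V-CI. \<forall>v\<in>V. Q1 u v = Q2 u v" using r1 r2 by auto
    have zp1: "\<forall>v\<in>V. 0 < Psi ytK x1 v" using Psi_exp[OF x1p] by simp
    have zp2: "\<forall>v\<in>V. 0 < Psi ytK x2 v" using Psi_exp[OF x2p] by simp
    define \<Delta> where "\<Delta> = D x2 - D x1"
    have ratio: "ytK a \<bullet> \<Delta> = ytK b \<bullet> \<Delta>" if aC: "a \<in> CR" and bC: "b \<in> CR" and ab: "(a,b) \<in> Rt\<^sup>*" for a b
    proof -
      have "Psi ytK x2 a / Psi ytK x1 a = Psi ytK x2 b / Psi ytK x1 b"
        using main_inv[OF fV n1 n2 supp12 rows12 _ zp1 zp2 b1 b2 CIV CRV _ aC bC] eE symRt domV ab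
        by simp
      then have "exp (ytK a \<bullet> D x2) / exp (ytK a \<bullet> D x1) = exp (ytK b \<bullet> D x2) / exp (ytK b \<bullet> D x1)"
        unfolding Psi_exp[OF x1p] Psi_exp[OF x2p] D_def by simp
      then have "exp (ytK a \<bullet> \<Delta>) = exp (ytK b \<bullet> \<Delta>)"
        unfolding \<Delta>_def by (simp add: inner_diff_right exp_diff)
      then show ?thesis by simp
    qed
    have key: "(y i - ytK u) \<bullet> \<Delta> = 0" if ur: "u \<in> relt" and ifib: "i \<in> fib u" for u i
    proof (cases "u \<in> CI")
      case False
      then have "i = hK u" using fib_proper[OF ur False] ifib by blast
      moreover have "ytK u = y (hK u)" using hKp ur by blast
      ultimately show ?thesis by simp
    next
      case True
      have ir: "i \<in> rel" "h i = u" using fibrel[OF ifib] by blast+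
      have hr: "hK u \<in> rel" "h (hK u) = u" using hKsub hKp ur by blast+
      obtain c where ceq: "y (hK u) - y i = (\<Sum>(a, b)\<in>{(a, b). a < b \<and> b < mt}. c a b *\<^sub>R (y (hK b) - y (hK a)))"
        and cc: "\<forall>a b. a < b \<and> c a b \<noteq> 0 \<longrightarrow> (a, b) \<in> linked mt Rt \<and> a \<in> CR \<and> b \<in> CR"
      proof -
        have resall: "\<forall>k'\<in>C_I rel h. \<forall>i\<in>rel. \<forall>j\<in>rel. h i = k' \<longrightarrow> h j = k' \<longrightarrow>
          (\<exists>c :: nat \<Rightarrow> nat \<Rightarrow> real.
           y j - y i = (\<Sum>(i', j')\<in>{(a, b). a < b \<and> b < mt}. c i' j' *\<^sub>R (y (hK j') - y (hK i'))) \<and>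
           (\<forall>i' j'. i' < j' \<and> c i' j' \<noteq> 0 \<longrightarrow>
               (i', j') \<in> linked mt Rt \<and> i' \<in> CR \<and> j' \<in> CR))"
          using res unfolding resolving_set_def rel_def by (rule conjunct2)
        have uC: "u \<in> C_I rel h" using True CI_def by simp
        from resall[rule_format, OF uC ir(1) hr(1) ir(2) hr(2)] that show ?thesis by blast
      qed
      have "(y (hK u) - y i) \<bullet> \<Delta> = (\<Sum>(a, b)\<in>{(a, b). a < b \<and> b < mt}. c a b *\<^sub>R (y (hK b) - y (hK a))) \<bullet> \<Delta>"
        using ceq by simp
      also have "\<dots> = (\<Sum>p\<in>{(a, b). a < b \<and> b < mt}. (case p of (a,b) \<Rightarrow> c a b *\<^sub>R (y (hK b) - y (hK a))) \<bullet> \<Delta>)"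
        by (rule inner_sum_left)
      also have "\<dots> = 0"
      proof (rule sum.neutral, rule ballI)
        fix p assume "p \<in> {(a, b). a < b \<and> b < mt}"
        then obtain a b where p: "p = (a,b)" "a < b" by auto
        show "(case p of (a,b) \<Rightarrow> c a b *\<^sub>R (y (hK b) - y (hK a))) \<bullet> \<Delta> = 0"
        proof (cases "c a b = 0")
          case False
          then have l: "(a, b) \<in> linked mt Rt" and aC: "a \<in> CR" and bC: "b \<in> CR"
            using cc[rule_format, of a b] p by blast+
          have "(a,b) \<in> Rt\<^sup>*" using l wr unfolding weakly_reversible_def by blast
          then have "ytK a \<bullet> \<Delta> = ytK b \<bullet> \<Delta>" using ratio aC bC by blast
          moreover have "ytK a = y (hK a)" "ytK b = y (hK b)" using hKp aC bC CRsub by blast+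
          ultimately show ?thesis using p by (simp add: inner_diff_left)
        qed (simp add: p)
      qed
      finally have z0: "(y (hK u) - y i) \<bullet> \<Delta> = 0" .
      have "ytK u = y (hK u)" using hKp ur by blast
      then have "y i - ytK u = - (y (hK u) - y i)" by simp
      then have "(y i - ytK u) \<bullet> \<Delta> = - ((y (hK u) - y i) \<bullet> \<Delta>)"
        by (simp only: inner_minus_left)
      then show ?thesis using z0 by simp
    qed
    show ?thesis
    proof (intro ext)
      fix u v
      show "Qx x1 u v = Qx x2 u v"
      proof (cases "u \<in> relt")
        case False then show ?thesis unfolding Qx_def using fib_empty by simp
      next
        case True
        show ?thesis unfolding Qx_def
        proof (rule sum.cong)
          fix i assume "i \<in> fib u"
          then have "(y i - ytK u) \<bullet> \<Delta> = 0" using key True by auto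
          then have "(y i - ytK u) \<bullet> D x1 = (y i - ytK u) \<bullet> D x2"
            unfolding \<Delta>_def by (simp add: inner_diff_right)
          then show "lam i v * exp ((y i - ytK u) \<bullet> D x1) = lam i v * exp ((y i - ytK u) \<bullet> D x2)" by simp
        qed simp
      qed
    qed
  qed
  have Qc: "\<forall>u v. 0 \<le> Qx x u v" "\<forall>u\<in>V. \<forall>v\<in>V. (0 < Qx x u v) = ((u,v) \<in> Rt)"
    "\<forall>u\<in>V-CI. \<forall>v\<in>V. Qx x u v = bt u v" for x
    using Qx_nn Qx_pos Qx_rows by auto
  have Bc: "\<forall>u v. 0 \<le> bt u v" "\<forall>u\<in>V. \<forall>v\<in>V. (0 < bt u v) = ((u,v) \<in> Rt)"
    "\<forall>u\<in>V-CI. \<forall>v\<in>V. bt u v = bt u v"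
    using bt_nn bt_pos by auto
  show ?thesis
  proof (cases "steady_states m y y k = {}")
    case False
    then obtain x0 where x0: "x0 \<in> steady_states m y y k" by blast
    then have x0p: "\<forall>s. 0 < x0 $ s" and bx0: "bal V (Qx x0) (Psi ytK x0)" using SO by auto
    have "steady_states m y y k = steady_states mt yt ytK (Qx x0)"
    proof (intro set_eqI iffI)
      fix x assume "x \<in> steady_states m y y k"
      then have xp: "\<forall>s. 0 < x $ s" and bx: "bal V (Qx x) (Psi ytK x)" using SO by auto
      have "Qx x0 = Qx x" using INV[OF Qc Qc x0p xp bx0 bx] .
      then show "x \<in> steady_states mt yt ytK (Qx x0)" using ST[OF rw_Qx] xp bx by simp
    next
      fix x assume "x \<in> steady_states mt yt ytK (Qx x0)"
      then have xp: "\<forall>s. 0 < x $ s" and bx: "bal V (Qx x0) (Psi ytK x)" using ST[OF rw_Qx] by auto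
      have "Qx x0 = Qx x" using INV[OF Qc Qc x0p xp bx0 bx] .
      then show "x \<in> steady_states m y y k" using SO xp bx by simp
    qed
    then show ?thesis using rw_Qx by blast
  next
    case O: True
    show ?thesis
    proof (cases "steady_states mt yt ytK bt = {}")
      case True then show ?thesis using O rwt by auto
    next
      case False
      then obtain x1 where "x1 \<in> steady_states mt yt ytK bt" by blast
      then have x1p: "\<forall>s. 0 < x1 $ s" and bx1: "bal V bt (Psi ytK x1)" using ST[OF rwt] by auto
      have "steady_states mt yt ytK (Qx x1) = {}"
      proof (rule ccontr)
        assume "steady_states mt yt ytK (Qx x1) \<noteq> {}"
        then obtain x where "x \<in> steady_states mt yt ytK (Qx x1)" by blast
        then have xp: "\<forall>s. 0 < x $ s" and bx: "bal V (Qx x1) (Psi ytK x)" using ST[OF rw_Qx] by auto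
        have e1: "Qx x1 = Qx x" using INV[OF Bc Qc x1p xp bx1 bx] .
        then have "x \<in> steady_states m y y k" using SO xp bx by simp
        then show False using O by simp
      qed
      then show ?thesis using O rw_Qx by metis
    qed
  qed
qed

end
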